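(* Let $0<\lambda<1$ and $g_\lambda(x)=\frac{x^{\lambda}\Gamma(x)}{\Gamma(\lambda+x)}$, $x>0$. Then $\log g_\lambda\in\mathcal S_2$, and $\log g_\lambda\notin\mathcal S_\tau$ for every $\tau\in(0,2)$.
   Context: For $\tau>0$, $\mathcal S_\tau$ (generalized Stieltjes functions of order $\tau$) is the class of functions on $(0,\infty)$ of the form $g(x)=\int_0^\infty\frac{d\mu(t)}{(t+x)^{\tau}}+c$, where $\mu$ is a positive measure on $[0,\infty)$ making the integral converge for all $x>0$ and $c\ge 0$. *)

theory Defs
  imports "HOL-Analysis.Analysis"
begin

definition gen_stieltjes :: "real \<Rightarrow> (real \<Rightarrow> real) set" where
  "gen_stieltjes \<tau> =
     {g. \<exists>(\<mu>::real measure) (c::real).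
          sets \<mu> = sets borel \<and> emeasure \<mu> {..<0} = 0 \<and> c \<ge> 0 \<and>
          (\<forall>x>0. set_integrable \<mu> {0..} (\<lambda>t. 1 / (t + x) powr \<tau>) \<and>
                  g x = (\<integral>t\<in>{0..}. 1 / (t + x) powr \<tau> \<partial>\<mu>) + c)}"

definition g_lam :: "real \<Rightarrow> real \<Rightarrow> real" where
  "g_lam l x = x powr l * Gamma x / Gamma (l + x)"

end

theory Submission
  imports Defs "HOL-Real_Asymp.Real_Asymp"
begin

definition wlam :: "real \<Rightarrow> real \<Rightarrow> real" where
  "wlam l s = (if s \<le> l then (1 - l) * s else l * (1 - s))"
definition WW :: "real \<Rightarrow> real \<Rightarrow> real" where
  "WW l t = (if t < 0 then 0 else wlam l (frac t))"
definition hh :: "real \<Rightarrow> real \<Rightarrow> real" where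
  "hh l y = ln (y + l) - (1 - l) * ln y - l * ln (y + 1)"

lemma wf_nonneg: "0 < l \<Longrightarrow> l < 1 \<Longrightarrow> 0 \<le> s \<Longrightarrow> s \<le> 1 \<Longrightarrow> 0 \<le> wlam l s"
  by (auto simp: wlam_def)
lemma wf_le1: "0 < l \<Longrightarrow> l < 1 \<Longrightarrow> 0 \<le> s \<Longrightarrow> s \<le> 1 \<Longrightarrow> wlam l s \<le> 1"
  unfolding wlam_def by (auto intro: mult_le_one)
lemma WW_nonneg: "0 < l \<Longrightarrow> l < 1 \<Longrightarrow> 0 \<le> WW l t"
  unfolding WW_def using wf_nonneg[of l "frac t"] frac_lt_1[of t] frac_ge_0[of t] by auto
lemma WW_le1: "0 < l \<Longrightarrow> l < 1 \<Longrightarrow> WW l t \<le> 1"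
  unfolding WW_def using wf_le1[of l "frac t"] frac_lt_1[of t] frac_ge_0[of t] by auto
lemma WW_meas[measurable]: "WW l \<in> borel_measurable borel"
  unfolding WW_def wlam_def frac_def by measurable

lemma hh_integral:
  assumes l: "0 < l" "l < 1" and y: "0 < y"
  shows "((\<lambda>s. wlam l s / (s + y)^2) has_integral hh l y) {0..1}"
proof -
  define P1 where "P1 s = (1 - l) * (ln (s + y) + y / (s + y))" for s
  define P2 where "P2 s = l * (- (1 + y) / (s + y) - ln (s + y))" for s
  have d1: "(P1 has_vector_derivative ((1 - l) * s / (s + y)^2)) (at s within {0..l})"
    if "s \<in> {0..l}" for s
  proof -
    have "(P1 has_real_derivative ((1 - l) * (1 / (s + y) - y / (s + y)^2))) (at s within {0..l})"
      unfolding P1_def using that y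
      by (auto intro!: derivative_eq_intros) (auto simp: divide_simps power2_eq_square algebra_simps)
    moreover have "(1 - l) * (1 / (s + y) - y / (s + y)^2) = (1 - l) * s / (s + y)^2"
    proof -
      have sy: "s + y \<noteq> 0" using that y by auto
      show ?thesis using sy by (simp add: divide_simps) (simp add: power2_eq_square algebra_simps)
    qed
    ultimately show ?thesis by (simp add: has_real_derivative_iff_has_vector_derivative)
  qed
  have d2: "(P2 has_vector_derivative (l * (1 - s) / (s + y)^2)) (at s within {l..1})"
    if "s \<in> {l..1}" for s
  proof -
    have "(P2 has_real_derivative (l * ((1 + y) / (s + y)^2 - 1 / (s + y)))) (at s within {l..1})"
      unfolding P2_def using that y l
      by (auto intro!: derivative_eq_intros) (auto simp: divide_simps power2_eq_square algebra_simps)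
    moreover have "l * ((1 + y) / (s + y)^2 - 1 / (s + y)) = l * (1 - s) / (s + y)^2"
    proof -
      have sy: "s + y \<noteq> 0" using that y l by auto
      show ?thesis using sy by (simp add: divide_simps) (simp add: power2_eq_square algebra_simps)
    qed
    ultimately show ?thesis by (simp add: has_real_derivative_iff_has_vector_derivative)
  qed
  have i1: "((\<lambda>s. (1 - l) * s / (s + y)^2) has_integral (P1 l - P1 0)) {0..l}"
    using l d1 by (intro fundamental_theorem_of_calculus) auto
  have i2: "((\<lambda>s. l * (1 - s) / (s + y)^2) has_integral (P2 1 - P2 l)) {l..1}"
    using l d2 by (intro fundamental_theorem_of_calculus) auto
  have i1': "((\<lambda>s. wlam l s / (s + y)^2) has_integral (P1 l - P1 0)) {0..l}"
    using i1 by (subst has_integral_cong[where g="\<lambda>s. (1 - l) * s / (s + y)^2"]) (auto simp: wlam_def)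
  have i2': "((\<lambda>s. wlam l s / (s + y)^2) has_integral (P2 1 - P2 l)) {l..1}"
    using i2 by (subst has_integral_cong[where g="\<lambda>s. l * (1 - s) / (s + y)^2"]) (auto simp: wlam_def)
  have "((\<lambda>s. wlam l s / (s + y)^2) has_integral (P1 l - P1 0) + (P2 1 - P2 l)) {0..1}"
    using l by (intro has_integral_combine[OF _ _ i1' i2']) auto
  moreover have "(P1 l - P1 0) + (P2 1 - P2 l) = hh l y"
  proof -
    have y1: "(1 + y) / (1 + y) = 1" "y / (0 + y) = 1" using y by auto
    have br: "(1 - l) * (y / (l + y)) - (1 - l) - l + l * ((1 + y) / (l + y)) = 0"
      using l y by (simp add: divide_simps) (simp add: algebra_simps)
    have e: "(1 - l) * (ln (l + y) + y / (l + y)) - (1 - l) * (ln (0 + y) + y / (0 + y)) +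
       (l * (- (1 + y) / (1 + y) - ln (1 + y)) - l * (- (1 + y) / (l + y) - ln (l + y)))
       = (ln (l + y) - (1 - l) * ln y - l * ln (1 + y)) + ((1 - l) * (y / (l + y)) - (1 - l) - l + l * ((1 + y) / (l + y)))"
      unfolding y1 minus_divide_left[symmetric] y1 by (simp add: algebra_simps)
    show ?thesis using e br unfolding P1_def P2_def hh_def by (simp add: add.commute)
  qed
  ultimately show ?thesis by simp
qed

lemma hh_nonneg: "0 < l \<Longrightarrow> l < 1 \<Longrightarrow> 0 < y \<Longrightarrow> 0 \<le> hh l y"
  by (rule has_integral_nonneg[OF hh_integral]) (auto intro!: divide_nonneg_nonneg wf_nonneg)

lemma hh_partial:
  assumes l: "0 < l" "l < 1" and x: "0 < x"
  shows "(\<Sum>k<Suc n. hh l (x + real k)) =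
     l * ln x + ln_Gamma_series x n - ln_Gamma_series (x + l) n + l * (ln (real n) - ln (x + real n + 1))"
proof (induction n)
  case 0
  then show ?case using l x by (simp add: hh_def ln_Gamma_series_def algebra_simps add.commute)
next
  case (Suc n)
  have a: "ln (z / real (Suc n) + 1) = ln (z + real (Suc n)) - ln (real (Suc n))" if "z > 0" for z
  proof -
    have "z / real (Suc n) + 1 = (z + real (Suc n)) / real (Suc n)" by (simp add: field_simps)
    then show ?thesis using that by (simp add: ln_div)
  qed
  have gs: "ln_Gamma_series z (Suc n) = ln_Gamma_series z n + z * (ln (real (Suc n)) - ln (real n))
            - ln (z / real (Suc n) + 1)" for z :: real
    by (simp add: ln_Gamma_series_def algebra_simps)
  show ?case
    using Suc.IH x l a[of x] a[of "x + l"]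
    by (simp add: gs hh_def algebra_simps add.commute add.left_commute)
qed

lemma hh_sums:
  assumes l: "0 < l" "l < 1" and x: "0 < x"
  shows "(\<lambda>k. hh l (x + real k)) sums ln (g_lam l x)"
proof -
  have gl: "ln (g_lam l x) = l * ln x + ln_Gamma x - ln_Gamma (x + l)"
  proof -
    have g1: "Gamma x > 0" "Gamma (l + x) > 0" "Gamma x \<noteq> 0" "Gamma (l + x) \<noteq> 0"
      using l x by (auto, metis Gamma_real_pos less_irrefl, metis Gamma_real_pos less_irrefl add_pos_pos)
    show ?thesis using l x g1
      by (simp add: g_lam_def ln_Gamma_real_pos ln_mult ln_div ln_powr add.commute)
  qed
  have "(\<lambda>n. l * ln x + ln_Gamma_series x n - ln_Gamma_series (x + l) n + l * (ln (real n) - ln (x + real n + 1)))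
      \<longlonglongrightarrow> l * ln x + ln_Gamma x - ln_Gamma (x + l) + l * 0"
  proof (intro tendsto_intros)
    show "ln_Gamma_series x \<longlonglongrightarrow> ln_Gamma x" using x by (rule ln_Gamma_real_LIMSEQ)
    show "ln_Gamma_series (x + l) \<longlonglongrightarrow> ln_Gamma (x + l)" using x l by (intro ln_Gamma_real_LIMSEQ) auto
    show "(\<lambda>n. ln (real n) - ln (x + real n + 1)) \<longlonglongrightarrow> 0" using x by real_asymp
  qed
  then have "(\<lambda>n. \<Sum>k<Suc n. hh l (x + real k)) \<longlonglongrightarrow> ln (g_lam l x)"
    using hh_partial[OF l x] gl by simp
  then show ?thesis unfolding sums_def using filterlim_sequentially_Suc by blast
qed

lemma hh_nn:
  assumes l: "0 < l" "l < 1" and y: "0 < y"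
  shows "(\<integral>\<^sup>+ s. ennreal (indicator {0..1} s * (wlam l s / (s + y)^2)) \<partial>lborel) = ennreal (hh l y)"
  by (rule nn_integral_has_integral_lebesgue[OF _ hh_integral[OF l y]])
     (use l y in \<open>auto intro!: divide_nonneg_nonneg wf_nonneg\<close>)

lemma WW_split:
  assumes l: "0 < l" "l < 1"
  shows "ennreal (indicator {0..} t * (WW l t / (t + x)^2)) =
    (\<Sum>k. ennreal (indicator {real k..<real k + 1} t * (wlam l (t - real k) / (t + x)^2)))"
proof (cases "t < 0")
  case True
  then show ?thesis by (simp add: indicator_def)
next
  case False
  define k0 where "k0 = nat \<lfloor>t\<rfloor>"
  have ind: "indicator {real k..<real k + 1} t = (if k = k0 then 1 else (0::real))" for k
  proof -
    have "t \<in> {real k..<real k + 1} \<longleftrightarrow> \<lfloor>t\<rfloor> = int k"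
      by (simp add: floor_eq_iff)
    also have "\<dots> \<longleftrightarrow> k = k0" using False unfolding k0_def by auto
    finally show ?thesis by (simp add: indicator_def)
  qed
  have fr: "frac t = t - real k0"
    using False unfolding k0_def frac_def by simp
  have "(\<Sum>k. ennreal (indicator {real k..<real k + 1} t * (wlam l (t - real k) / (t + x)^2)))
      = (\<Sum>k. if k = k0 then ennreal (wlam l (t - real k) / (t + x)^2) else 0)"
    by (intro suminf_cong) (simp add: ind)
  also have "\<dots> = ennreal (wlam l (t - real k0) / (t + x)^2)"
    by (rule sums_unique[symmetric]) (rule sums_single)
  finally show ?thesis using False fr by (simp add: WW_def)
qed

lemma nn_integral_shift:
  fixes f :: "real \<Rightarrow> ennreal"
  assumes [measurable]: "f \<in> borel_measurable borel"
  shows "(\<integral>\<^sup>+ t. f t \<partial>lborel) = (\<integral>\<^sup>+ s. f (c + s) \<partial>lborel)"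
proof -
  have "(\<integral>\<^sup>+ t. f t \<partial>lborel) = (\<integral>\<^sup>+ t. f t \<partial>distr lborel borel ((+) c))"
    by (simp add: lborel_distr_plus)
  also have "\<dots> = (\<integral>\<^sup>+ s. f (c + s) \<partial>lborel)"
    by (subst nn_integral_distr) auto
  finally show ?thesis .
qed

lemma piece_nn:
  assumes l: "0 < l" "l < 1" and x: "0 < x"
  shows "(\<integral>\<^sup>+ t. ennreal (indicator {real k..<real k + 1} t * (wlam l (t - real k) / (t + x)^2)) \<partial>lborel)
     = ennreal (hh l (x + real k))"
proof -
  have m: "(\<lambda>t. ennreal (indicator {real k..<real k + 1} t * (wlam l (t - real k) / (t + x)^2))) \<in> borel_measurable borel"
    unfolding wlam_def by measurable
  have "(\<integral>\<^sup>+ t. ennreal (indicator {real k..<real k + 1} t * (wlam l (t - real k) / (t + x)^2)) \<partial>lborel)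
    = (\<integral>\<^sup>+ s. ennreal (indicator {real k..<real k + 1} (real k + s) * (wlam l (real k + s - real k) / (real k + s + x)^2)) \<partial>lborel)"
    by (rule nn_integral_shift[OF m])
  also have "\<dots> = (\<integral>\<^sup>+ s. ennreal (indicator {0..1} s * (wlam l s / (s + (x + real k))^2)) \<partial>lborel)"
  proof -
    show ?thesis
    proof (rule nn_integral_cong_AE)
      show "AE s in lborel. ennreal (indicator {real k..<real k + 1} (real k + s) * (wlam l (real k + s - real k) / (real k + s + x)^2))
        = ennreal (indicator {0..1} s * (wlam l s / (s + (x + real k))^2))"
        using AE_lborel_singleton[of 1] by eventually_elim (auto simp: indicator_def algebra_simps)
    qed
  qed
  also have "\<dots> = ennreal (hh l (x + real k))"
    using x by (intro hh_nn l) auto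
  finally show ?thesis .
qed

lemma partA_nn:
  assumes l: "0 < l" "l < 1" and x: "0 < x"
  shows "(\<integral>\<^sup>+ t. ennreal (indicator {0..} t * (WW l t / (t + x)^2)) \<partial>lborel) = ennreal (ln (g_lam l x))"
    and "0 \<le> ln (g_lam l x)"
proof -
  have "(\<integral>\<^sup>+ t. ennreal (indicator {0..} t * (WW l t / (t + x)^2)) \<partial>lborel)
     = (\<integral>\<^sup>+ t. (\<Sum>k. ennreal (indicator {real k..<real k + 1} t * (wlam l (t - real k) / (t + x)^2))) \<partial>lborel)"
    by (simp only: WW_split[OF l])
  also have "\<dots> = (\<Sum>k. (\<integral>\<^sup>+ t. ennreal (indicator {real k..<real k + 1} t * (wlam l (t - real k) / (t + x)^2)) \<partial>lborel))"
    by (rule nn_integral_suminf) (unfold wlam_def, measurable)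
  also have "\<dots> = (\<Sum>k. ennreal (hh l (x + real k)))"
    by (intro suminf_cong piece_nn[OF l x])
  also have "\<dots> = ennreal (\<Sum>k. hh l (x + real k))"
  proof (rule suminf_ennreal2)
    show "\<And>k. 0 \<le> hh l (x + real k)" using x by (intro hh_nonneg[OF l]) auto
    show "summable (\<lambda>k. hh l (x + real k))" using hh_sums[OF l x] by (rule sums_summable)
  qed
  also have "(\<Sum>k. hh l (x + real k)) = ln (g_lam l x)"
    using hh_sums[OF l x] by (simp add: sums_iff)
  finally show "(\<integral>\<^sup>+ t. ennreal (indicator {0..} t * (WW l t / (t + x)^2)) \<partial>lborel) = ennreal (ln (g_lam l x))" .
  show "0 \<le> ln (g_lam l x)"
    by (rule sums_le[OF _ sums_zero hh_sums[OF l x]]) (use x in \<open>auto intro: hh_nonneg[OF l]\<close>)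
qed

lemma int_cont01:
  fixes g :: "real \<Rightarrow> real"
  assumes fM: "finite_measure M" and sM: "sets M = sets borel" and g: "continuous_on {0..1} g"
  shows "integrable M (\<lambda>y. indicator {0..1} y * g y)"
proof -
  obtain B where B0: "\<forall>y\<in>{0..1}. norm (g y) \<le> B"
    using compact_imp_bounded[OF compact_continuous_image[OF g compact_Icc]]
    by (auto simp: bounded_iff)
  then have B: "\<And>y. y \<in> {0..1} \<Longrightarrow> norm (g y) \<le> B" by blast
  have m: "(\<lambda>y. indicator {0..1} y * g y) \<in> borel_measurable borel"
    using borel_measurable_continuous_on_indicator[OF _ g] by simp
  have m': "(\<lambda>y. indicator {0..1} y * g y) \<in> borel_measurable M"
    using m measurable_cong_sets[OF sM refl] by blast
  show ?thesis
  proof (rule finite_measure.integrable_const_bound[OF fM _ m'])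
    show "AE x in M. norm (indicator {0..1} x * g x) \<le> max B 0"
      using B by (intro AE_I2) (auto simp: indicator_def intro: le_max_iff_disj[THEN iffD2])
  qed
qed

lemma poly_bound:
  fixes \<phi> p :: "real \<Rightarrow> real"
  assumes fK: "finite_measure K" and sK: "sets K = sets borel"
    and phi: "continuous_on {0..1} \<phi>" and pc: "continuous_on {0..1} p"
    and e: "e > 0" and pe: "\<And>x. x \<in> {0..1} \<Longrightarrow> \<bar>\<phi> x - p x\<bar> < e"
  shows "\<bar>(\<integral>y. indicator {0..1} y * \<phi> y \<partial>K) - (\<integral>y. indicator {0..1} y * p y \<partial>K)\<bar> \<le> e * measure K (space K)"
proof -
  have dc: "continuous_on {0..1} (\<lambda>y. \<phi> y - p y)" using phi pc by (intro continuous_intros)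
  have "(\<integral>y. indicator {0..1} y * \<phi> y \<partial>K) - (\<integral>y. indicator {0..1} y * p y \<partial>K)
      = (\<integral>y. indicator {0..1} y * (\<phi> y - p y) \<partial>K)"
    using int_cont01[OF fK sK phi] int_cont01[OF fK sK pc]
    by (simp add: right_diff_distrib)
  also have "\<bar>\<dots>\<bar> \<le> (\<integral>y. e \<partial>K)"
  proof (rule integral_abs_bound_integral)
    show "integrable K (\<lambda>y. indicator {0..1} y * (\<phi> y - p y))" using int_cont01[OF fK sK dc] .
    show "integrable K (\<lambda>y. e)" using fK by (simp add: finite_measure.integrable_const)
    show "\<And>y. y \<in> space K \<Longrightarrow> \<bar>indicator {0..1} y * (\<phi> y - p y)\<bar> \<le> e"
      using pe e by (auto simp: indicator_def less_imp_le)
  qed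
  also have "(\<integral>y. e \<partial>K) = e * measure K (space K)" by simp
  finally show ?thesis .
qed

lemma cont_moment_eq:
  fixes M N :: "real measure" and \<phi> :: "real \<Rightarrow> real"
  assumes fM: "finite_measure M" and sM: "sets M = sets borel"
    and fN: "finite_measure N" and sN: "sets N = sets borel"
    and mom: "\<And>n. (\<integral>y. indicator {0..1} y * y^n \<partial>M) = (\<integral>y. indicator {0..1} y * y^n \<partial>N)"
    and phi: "continuous_on {0..1} \<phi>"
  shows "(\<integral>y. indicator {0..1} y * \<phi> y \<partial>M) = (\<integral>y. indicator {0..1} y * \<phi> y \<partial>N)"
proof -
  define IM where "IM g = (\<integral>y. indicator {0..1} y * g y \<partial>M)" for g :: "real \<Rightarrow> real"
  define IN where "IN g = (\<integral>y. indicator {0..1} y * g y \<partial>N)" for g :: "real \<Rightarrow> real"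
  define mM where "mM = measure M (space M)"
  define mN where "mN = measure N (space N)"
  have mM: "0 \<le> mM" and mN: "0 \<le> mN" by (auto simp: mM_def mN_def)
  have poly: "IM (\<lambda>x. \<Sum>i\<le>n. a i * x^i) = IN (\<lambda>x. \<Sum>i\<le>n. a i * x^i)" for a n
  proof -
    have intM: "integrable M (\<lambda>y. indicator {0..1} y * y^i)" for i
      by (rule int_cont01[OF fM sM]) (intro continuous_intros)
    have intN: "integrable N (\<lambda>y. indicator {0..1} y * y^i)" for i
      by (rule int_cont01[OF fN sN]) (intro continuous_intros)
    have "IM (\<lambda>x. \<Sum>i\<le>n. a i * x^i) = (\<integral>y. (\<Sum>i\<le>n. a i * (indicator {0..1} y * y^i)) \<partial>M)"
      unfolding IM_def by (simp add: sum_distrib_left mult.left_commute)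
    also have "\<dots> = (\<Sum>i\<le>n. a i * (\<integral>y. indicator {0..1} y * y^i \<partial>M))"
      using intM by (simp add: integral_sum integral_mult_right_zero)
    also have "\<dots> = (\<Sum>i\<le>n. a i * (\<integral>y. indicator {0..1} y * y^i \<partial>N))"
      using mom by simp
    also have "\<dots> = (\<integral>y. (\<Sum>i\<le>n. a i * (indicator {0..1} y * y^i)) \<partial>N)"
      using intN by (simp add: integral_sum integral_mult_right_zero)
    also have "\<dots> = IN (\<lambda>x. \<Sum>i\<le>n. a i * x^i)"
      unfolding IN_def by (simp add: sum_distrib_left mult.left_commute)
    finally show ?thesis .
  qed
  have approx: "\<bar>IM \<phi> - IN \<phi>\<bar> \<le> e * (mM + mN)" if e: "e > 0" for e
  proof -
    obtain p where p: "real_polynomial_function p" "\<And>x. x \<in> {0..1} \<Longrightarrow> \<bar>\<phi> x - p x\<bar> < e"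
      using Stone_Weierstrass_real_polynomial_function[OF compact_Icc phi e] by blast
    obtain a n where pa: "p = (\<lambda>x. \<Sum>i\<le>n. a i * x^i)"
      using p(1) real_polynomial_function_iff_sum by blast
    have pc: "continuous_on {0..1} p" unfolding pa by (intro continuous_intros)
    have b1: "\<bar>IM \<phi> - IM p\<bar> \<le> e * mM"
      unfolding IM_def mM_def by (rule poly_bound[OF fM sM phi pc e p(2)])
    have b2: "\<bar>IN \<phi> - IN p\<bar> \<le> e * mN"
      unfolding IN_def mN_def by (rule poly_bound[OF fN sN phi pc e p(2)])
    have "IM p = IN p" unfolding pa by (rule poly)
    then show ?thesis using b1 b2 by (simp add: algebra_simps abs_le_iff)
  qed
  show ?thesis
  proof (rule ccontr)
    assume ne: "(\<integral>y. indicator {0..1} y * \<phi> y \<partial>M) \<noteq> (\<integral>y. indicator {0..1} y * \<phi> y \<partial>N)"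
    define d where "d = \<bar>IM \<phi> - IN \<phi>\<bar>"
    have d: "d > 0" using ne by (simp add: d_def IM_def IN_def)
    define e where "e = d / (2 * (mM + mN + 1))"
    have e: "e > 0" using d mM mN by (simp add: e_def)
    have "d \<le> e * (mM + mN)" using approx[OF e] by (simp add: d_def)
    also have "\<dots> < d"
    proof -
      have "e * (mM + mN) \<le> e * (mM + mN + 1)" using e by simp
      also have "e * (mM + mN + 1) = d / 2" using mM mN by (simp add: e_def field_simps)
      finally show ?thesis using d by simp
    qed
    finally show False by simp
  qed
qed

lemma moment_unique:
  fixes M N :: "real measure"
  assumes fM: "finite_measure M" and sM: "sets M = sets borel"
    and fN: "finite_measure N" and sN: "sets N = sets borel"
    and suppM: "emeasure M (- {0..1}) = 0" and suppN: "emeasure N (- {0..1}) = 0"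
    and mom: "\<And>n. (\<integral>y. indicator {0..1} y * y^n \<partial>M) = (\<integral>y. indicator {0..1} y * y^n \<partial>N)"
  shows "M = N"
proof (rule measure_eqI_lessThan[OF sM sN])
  show "\<And>x. emeasure M {x<..} < \<infinity>" using fM by (simp add: finite_measure.emeasure_eq_measure)
  fix a :: real
  define \<phi> where "\<phi> k y = max 0 (min 1 (real k * (y - a)))" for k :: nat and y :: real
  have phic: "continuous_on {0..1} (\<phi> k)" for k unfolding \<phi>_def by (intro continuous_intros)
  have lim: "(\<lambda>k. \<integral>y. indicator {0..1} y * \<phi> k y \<partial>K) \<longlonglongrightarrow> (\<integral>y. indicator {0..1} y * indicator {a<..} y \<partial>K)"
    if fK: "finite_measure K" and sK: "sets K = sets borel" for K :: "real measure"
  proof (rule integral_dominated_convergence[where w="\<lambda>_. 1"])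
    have mc: "measurable K = measurable borel" using sK by (intro ext measurable_cong_sets) auto
    show "(\<lambda>y. indicator {0..1} y * indicator {a<..} y :: real) \<in> borel_measurable K"
      unfolding mc by measurable
    show "(\<lambda>y. indicator {0..1} y * \<phi> k y) \<in> borel_measurable K" for k
      unfolding mc \<phi>_def by measurable
    show "integrable K (\<lambda>_. 1::real)" using fK by (simp add: finite_measure.integrable_const)
    show "AE y in K. norm (indicator {0..1} y * \<phi> k y) \<le> 1" for k
      by (intro AE_I2) (auto simp: indicator_def \<phi>_def)
    show "AE y in K. (\<lambda>k. indicator {0..1} y * \<phi> k y) \<longlonglongrightarrow> indicator {0..1} y * indicator {a<..} y"
    proof (intro AE_I2 tendsto_mult tendsto_const)
      fix y :: real
      show "(\<lambda>k. \<phi> k y) \<longlonglongrightarrow> indicator {a<..} y"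
      proof (cases "a < y")
        case True
        have "eventually (\<lambda>k. \<phi> k y = 1) sequentially"
        proof -
          obtain k0 :: nat where k0: "1 / (y - a) < real k0" using reals_Archimedean2 by blast
          show ?thesis
          proof (rule eventually_sequentiallyI[of k0])
            fix k assume "k0 \<le> k"
            then have "1 / (y - a) < real k" using k0 by (meson less_le_trans of_nat_le_iff)
            then have "1 < real k * (y - a)" using True by (simp add: field_simps)
            then show "\<phi> k y = 1" by (simp add: \<phi>_def)
          qed
        qed
        then show ?thesis using True by (simp add: tendsto_eventually)
      next
        case False
        then have "\<phi> k y = 0" for k
        proof -
          have "real k * (y - a) \<le> 0" using False by (intro mult_nonneg_nonpos) auto
          then show ?thesis by (simp add: \<phi>_def)
        qed
        then show ?thesis using False by simp
      qed
    qed
  qed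
  have "(\<integral>y. indicator {0..1} y * indicator {a<..} y \<partial>M) = (\<integral>y. indicator {0..1} y * indicator {a<..} y \<partial>N :: real)"
  proof (rule LIMSEQ_unique[OF lim[OF fM sM]])
    have "(\<lambda>k. \<integral>y. indicator {0..1} y * \<phi> k y \<partial>M) = (\<lambda>k. \<integral>y. indicator {0..1} y * \<phi> k y \<partial>N)"
      by (intro ext cont_moment_eq[OF fM sM fN sN mom phic])
    then show "(\<lambda>k. \<integral>y. indicator {0..1} y * \<phi> k y \<partial>M) \<longlonglongrightarrow> (\<integral>y. indicator {0..1} y * indicator {a<..} y \<partial>N)"
      using lim[OF fN sN] by simp
  qed
  then have meq: "measure M ({0..1} \<inter> {a<..}) = measure N ({0..1} \<inter> {a<..})"
    using sets_eq_imp_space_eq[OF sM] sets_eq_imp_space_eq[OF sN]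
    by (simp add: indicator_inter_arith[symmetric] del: integral_mult_right integral_mult_left)
  have red: "emeasure K {a<..} = ennreal (measure K ({0..1} \<inter> {a<..}))"
    if fK: "finite_measure K" and sK: "sets K = sets borel" and supp: "emeasure K (- {0..1}) = 0"
    for K :: "real measure"
  proof -
    have "- {0..1} \<in> null_sets K" using supp sK by (intro null_setsI) auto
    then have "emeasure K ({a<..} - (- {0..1})) = emeasure K {a<..}"
      using sK by (intro emeasure_Diff_null_set) auto
    moreover have "{a<..} - (- {0..1}) = {0..1} \<inter> {a<..}" by auto
    ultimately show ?thesis using fK by (simp add: finite_measure.emeasure_eq_measure)
  qed
  show "emeasure M {a<..} = emeasure N {a<..}"
    using red[OF fM sM suppM] red[OF fN sN suppN] meq by simp
qed

lemma AE_pos_shift: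
  assumes R[measurable]: "Measurable.pred borel R" and ae: "AE u in lborel. 0 < u \<longrightarrow> R u"
  shows "\<exists>x0>0. \<forall>n::nat. R (x0 + real n)"
proof (rule ccontr)
  assume nex: "\<not> (\<exists>x0>0. \<forall>n::nat. R (x0 + real n))"
  have "AE x in lborel. 0 < real n + 1 * x \<longrightarrow> R (real n + 1 * x)" for n :: nat
    by (rule AE_borel_affine[where P="\<lambda>u. 0 < u \<longrightarrow> R u"]) (use ae in auto)
  then have "AE x in lborel. \<forall>n::nat. 0 < real n + x \<longrightarrow> R (real n + x)"
    by (simp add: AE_all_countable)
  then have "AE x in lborel. \<not> (x \<in> {0<..<1::real})"
  proof (rule AE_mp, intro AE_I2 impI)
    fix x :: real assume all: "\<forall>n::nat. 0 < real n + x \<longrightarrow> R (real n + x)"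
    show "x \<notin> {0<..<1}"
    proof
      assume "x \<in> {0<..<1}"
      then have "x > 0" by simp
      then have "\<forall>n::nat. R (x + real n)" using all by (simp add: add.commute)
      then show False using nex \<open>x > 0\<close> by blast
    qed
  qed
  then have "emeasure lborel {x \<in> space lborel. x \<in> {0<..<1::real}} = 0"
    by (rule emeasure_eq_0_AE)
  moreover have "{x \<in> space lborel. x \<in> {0<..<1::real}} = {0<..<1}" by auto
  ultimately show False by simp
qed

lemma laplace_kernel:
  assumes a: "0 < a"
  shows "(\<integral>\<^sup>+ u. ennreal (indicator {0..} u * (u * exp (- a * u))) \<partial>lborel) = ennreal (1 / a^2)"
proof (rule nn_integral_has_integral_lebesgue)
  show "\<And>u. u \<in> {0..} \<Longrightarrow> 0 \<le> u * exp (- a * u)" by simp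
  show "((\<lambda>u. u * exp (- a * u)) has_integral 1 / a^2) {0..}"
  proof (rule has_integral_to_inf)
    define G where "G u = - (u / a + 1 / a^2) * exp (- a * u)" for u
    have d: "(G has_real_derivative (u * exp (- a * u))) (at u within S)" for u S
    proof -
      have "(G has_real_derivative (- (1 / a) * exp (- a * u) + (u / a + 1 / a^2) * (a * exp (- a * u)))) (at u within S)"
        unfolding G_def using a by (auto intro!: derivative_eq_intros) (auto simp: algebra_simps)
      moreover have "- (1 / a) * exp (- a * u) + (u / a + 1 / a^2) * (a * exp (- a * u)) = u * exp (- a * u)"
        using a by (simp add: field_simps power2_eq_square)
      ultimately show ?thesis by simp
    qed
    have i: "((\<lambda>u. u * exp (- a * u)) has_integral (G y - G 0)) {0..y}" if "0 \<le> y" for y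
      using that d by (intro fundamental_theorem_of_calculus) (auto simp: has_real_derivative_iff_has_vector_derivative[symmetric])
    show "\<And>y. (\<lambda>u. u * exp (- a * u)) integrable_on {0..y}"
      by (intro integrable_continuous_interval continuous_intros)
    have "\<forall>\<^sub>F y in at_top. integral {0..y} (\<lambda>u. u * exp (- a * u)) = G y - G 0"
      using i by (intro eventually_at_top_linorderI[of 0]) (simp add: integral_unique)
    moreover have "((\<lambda>y. G y - G 0) \<longlongrightarrow> 1 / a^2) at_top"
      unfolding G_def using a by real_asymp
    ultimately show "((\<lambda>y. integral {0..y} (\<lambda>u. u * exp (- a * u))) \<longlongrightarrow> 1 / a^2) at_top"
      by (simp add: filterlim_cong)
    show "\<And>y. 0 \<le> y \<Longrightarrow> 0 \<le> y * exp (- a * y)" by simp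
  qed
qed

lemma inv_sq_integral:
  assumes x: "0 < (x::real)"
  shows "((\<lambda>t. 1 / (t + x)^2) has_integral 1 / x) {0..}"
proof (rule has_integral_to_inf[where a=0])
  define G where "G t = - 1 / (t + x)" for t
  have i: "((\<lambda>t. 1 / (t + x)^2) has_integral (G y - G 0)) {0..y}" if "0 \<le> y" for y
  proof (intro fundamental_theorem_of_calculus that ballI)
    fix t assume t: "t \<in> {0..y}"
    have "(G has_real_derivative (1 / (t + x)^2)) (at t within {0..y})"
      unfolding G_def using t x
      by (auto intro!: derivative_eq_intros) (auto simp: divide_simps power2_eq_square algebra_simps)
    then show "(G has_vector_derivative (1 / (t + x)^2)) (at t within {0..y})"
      by (simp add: has_real_derivative_iff_has_vector_derivative)
  qed
  show "\<And>y. (\<lambda>t. 1 / (t + x)^2) integrable_on {0..y}"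
  proof -
    fix y :: real
    show "(\<lambda>t. 1 / (t + x)^2) integrable_on {0..y}"
      using x by (intro integrable_continuous_interval continuous_intros) auto
  qed
  have "\<forall>\<^sub>F y in at_top. integral {0..y} (\<lambda>t. 1 / (t + x)^2) = G y - G 0"
    using i by (intro eventually_at_top_linorderI[of 0]) (simp add: integral_unique)
  moreover have "((\<lambda>y. G y - G 0) \<longlongrightarrow> 1 / x) at_top"
    unfolding G_def using x by real_asymp
  ultimately show "((\<lambda>y. integral {0..y} (\<lambda>t. 1 / (t + x)^2)) \<longlongrightarrow> 1 / x) at_top"
    by (simp add: filterlim_cong)
  show "\<And>y. 0 \<le> y \<Longrightarrow> 0 \<le> 1 / (y + x)^2" by simp
qed

lemma laplace_unique:
  fixes P Q :: "real \<Rightarrow> ennreal"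
  assumes Pm[measurable]: "P \<in> borel_measurable borel" and Qm[measurable]: "Q \<in> borel_measurable borel"
    and x0: "0 < x0"
    and eq: "\<And>n::nat. (\<integral>\<^sup>+ u. indicator {0..} u * ennreal (exp (- (x0 + real n) * u)) * P u \<partial>lborel)
                    = (\<integral>\<^sup>+ u. indicator {0..} u * ennreal (exp (- (x0 + real n) * u)) * Q u \<partial>lborel)"
    and fin: "(\<integral>\<^sup>+ u. indicator {0..} u * ennreal (exp (- (x0 + real 0) * u)) * P u \<partial>lborel) < \<infinity>"
  shows "AE u in lborel. 0 \<le> u \<longrightarrow> P u = Q u"
proof -
  define f where "f R u = indicator {0..} u * ennreal (exp (- x0 * u)) * R u" for R :: "real \<Rightarrow> ennreal" and u
  define D where "D R = distr (density lborel (f R)) borel (\<lambda>u. exp (- u))" for R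
  have fm[measurable]: "f R \<in> borel_measurable borel" if [measurable]: "R \<in> borel_measurable borel" for R
    unfolding f_def by measurable
  have sD: "sets (D R) = sets borel" for R by (simp add: D_def)
  have mom_nn: "(\<integral>\<^sup>+ y. ennreal (indicator {0..1} y * y^n) \<partial>D R)
      = (\<integral>\<^sup>+ u. indicator {0..} u * ennreal (exp (- (x0 + real n) * u)) * R u \<partial>lborel)"
    if [measurable]: "R \<in> borel_measurable borel" for R n
  proof -
    have "(\<integral>\<^sup>+ y. ennreal (indicator {0..1} y * y^n) \<partial>D R)
        = (\<integral>\<^sup>+ u. ennreal (indicator {0..1} (exp (- u)) * exp (- u)^n) \<partial>density lborel (f R))"
      unfolding D_def by (subst nn_integral_distr) auto
    also have "\<dots> = (\<integral>\<^sup>+ u. f R u * ennreal (indicator {0..1} (exp (- u)) * exp (- u)^n) \<partial>lborel)"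
      by (subst nn_integral_density) auto
    also have "\<dots> = (\<integral>\<^sup>+ u. indicator {0..} u * ennreal (exp (- (x0 + real n) * u)) * R u \<partial>lborel)"
    proof (intro nn_integral_cong)
      fix u :: real
      show "f R u * ennreal (indicator {0..1} (exp (- u)) * exp (- u)^n)
          = indicator {0..} u * ennreal (exp (- (x0 + real n) * u)) * R u"
      proof (cases "0 \<le> u")
        case True
        then have i1: "indicator {0..1} (exp (- u)) = (1::real)" by (simp add: indicator_def)
        have e: "exp (- u) ^ n = exp (- (real n * u))"
          by (simp add: exp_of_nat_mult[symmetric])
        have "ennreal (exp (- x0 * u)) * ennreal (exp (- (real n * u))) = ennreal (exp (- (x0 + real n) * u))"
          by (simp add: ennreal_mult[symmetric] exp_add[symmetric] algebra_simps)
        then show ?thesis using True unfolding f_def i1 e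
          by (simp add: mult.commute mult.left_commute)
      next
        case False
        then show ?thesis by (simp add: f_def)
      qed
    qed
    finally show ?thesis .
  qed
  have emD: "emeasure (D R) UNIV = (\<integral>\<^sup>+ u. indicator {0..} u * ennreal (exp (- (x0 + real 0) * u)) * R u \<partial>lborel)"
    if [measurable]: "R \<in> borel_measurable borel" for R
  proof -
    have "emeasure (D R) UNIV = emeasure (density lborel (f R)) ((\<lambda>u. exp (- u)) -` UNIV)"
      unfolding D_def by (subst emeasure_distr) auto
    also have "\<dots> = (\<integral>\<^sup>+ u. f R u \<partial>lborel)"
      by (subst emeasure_density) auto
    finally show ?thesis by (simp add: f_def)
  qed
  have finD: "finite_measure (D R)"
    if [measurable]: "R \<in> borel_measurable borel" and fR: "(\<integral>\<^sup>+ u. indicator {0..} u * ennreal (exp (- (x0 + real 0) * u)) * R u \<partial>lborel) < \<infinity>" for R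
  proof (rule finite_measureI)
    show "emeasure (D R) (space (D R)) \<noteq> \<infinity>" using emD[OF that(1)] fR by (simp add: D_def)
  qed
  have suppD: "emeasure (D R) (- {0..1}) = 0" if [measurable]: "R \<in> borel_measurable borel" for R
  proof -
    have "emeasure (D R) (- {0..1}) = emeasure (density lborel (f R)) ((\<lambda>u. exp (- u)) -` (- {0..1}))"
      unfolding D_def by (subst emeasure_distr) auto
    also have pre: "(\<lambda>u. exp (- u)) -` (- {0..1}) = {..<0::real}"
    proof (intro set_eqI iffI)
      fix u :: real assume "u \<in> (\<lambda>u. exp (- u)) -` (- {0..1})"
      then have "1 < exp (- u)" by auto
      then show "u \<in> {..<0}" by simp
    next
      fix u :: real assume "u \<in> {..<0}"
      then have "1 < exp (- u)" by simp
      then show "u \<in> (\<lambda>u. exp (- u)) -` (- {0..1})" by auto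
    qed
    also have "emeasure (density lborel (f R)) {..<0} = (\<integral>\<^sup>+ u. f R u * indicator {..<0} u \<partial>lborel)"
      by (subst emeasure_density) auto
    also have "\<dots> = 0"
    proof -
      have z: "(\<lambda>u. f R u * indicator {..<0} u) = (\<lambda>u. 0)" by (auto simp: f_def indicator_def)
      show ?thesis by (simp only: z) simp
    qed
    finally show ?thesis by simp
  qed
  have finP: "finite_measure (D P)" by (rule finD[OF Pm fin])
  have finQ: "finite_measure (D Q)" by (rule finD[OF Qm]) (use fin eq[of 0] in simp)
  have momr: "(\<integral>y. indicator {0..1} y * y^n \<partial>D R) = enn2real (\<integral>\<^sup>+ u. indicator {0..} u * ennreal (exp (- (x0 + real n) * u)) * R u \<partial>lborel)"
    if [measurable]: "R \<in> borel_measurable borel" for R n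
  proof -
    have "(\<integral>y. indicator {0..1} y * y^n \<partial>D R) = enn2real (\<integral>\<^sup>+ y. ennreal (indicator {0..1} y * y^n) \<partial>D R)"
      by (rule integral_eq_nn_integral) (auto simp: sD measurable_cong_sets[OF sD refl] indicator_def intro!: AE_I2)
    then show ?thesis using mom_nn[OF that] by simp
  qed
  have DPQ: "D P = D Q"
  proof (rule moment_unique[OF finP sD finQ sD suppD[OF Pm] suppD[OF Qm]])
    fix n show "(\<integral>y. indicator {0..1} y * y^n \<partial>D P) = (\<integral>y. indicator {0..1} y * y^n \<partial>D Q)"
      using momr[OF Pm, of n] momr[OF Qm, of n] eq[of n] by simp
  qed
  have backD: "density lborel (f R) = distr (D R) borel (\<lambda>y. - ln y)" if [measurable]: "R \<in> borel_measurable borel" for R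
  proof -
    have "distr (D R) borel (\<lambda>y. - ln y) = distr (density lborel (f R)) borel ((\<lambda>y. - ln y) \<circ> (\<lambda>u. exp (- u)))"
      unfolding D_def by (rule distr_distr) auto
    also have "((\<lambda>y. - ln y) \<circ> (\<lambda>u. exp (- u))) = (\<lambda>u::real. u)" by (auto simp: comp_def)
    also have "distr (density lborel (f R)) borel (\<lambda>u. u) = density lborel (f R)"
      by (rule distr_id2) simp
    finally show ?thesis by simp
  qed
  have "density lborel (f P) = density lborel (f Q)"
    using backD[OF Pm] backD[OF Qm] DPQ by simp
  then have ae: "AE u in lborel. f P u = f Q u"
    by (intro sigma_finite_measure.density_unique[OF lborel.sigma_finite_measure_axioms]) auto
  show ?thesis
  proof (rule AE_mp[OF ae], intro AE_I2 impI)
    fix u :: real assume fe: "f P u = f Q u" and u: "0 \<le> u"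
    then have "ennreal (exp (- x0 * u)) * P u = ennreal (exp (- x0 * u)) * Q u"
      by (simp add: f_def)
    then have "ennreal (exp (x0 * u)) * (ennreal (exp (- x0 * u)) * P u) = ennreal (exp (x0 * u)) * (ennreal (exp (- x0 * u)) * Q u)"
      by simp
    moreover have "ennreal (exp (x0 * u)) * ennreal (exp (- x0 * u)) = 1"
      by (simp add: ennreal_mult[symmetric] exp_add[symmetric])
    ultimately show "P u = Q u" by (simp add: mult.assoc[symmetric])
  qed
qed

lemma partA:
  assumes l: "0 < l" "l < 1"
  shows "(\<lambda>x. ln (g_lam l x)) \<in> gen_stieltjes 2"
proof -
  define \<mu> where "\<mu> = density lborel (\<lambda>t. ennreal (WW l t))"
  have s\<mu>: "sets \<mu> = sets borel" by (simp add: \<mu>_def)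
  have e0: "emeasure \<mu> {..<0} = 0"
  proof -
    have z: "(\<lambda>t. ennreal (WW l t) * indicator {..<0} t) = (\<lambda>t. 0)"
      by (auto simp: WW_def indicator_def)
    show ?thesis unfolding \<mu>_def by (subst emeasure_density) (auto simp: z)
  qed
  have key: "set_integrable \<mu> {0..} (\<lambda>t. 1 / (t + x) powr 2) \<and>
             ln (g_lam l x) = (\<integral>t\<in>{0..}. 1 / (t + x) powr 2 \<partial>\<mu>) + 0" if x: "x > 0" for x
  proof -
    have eqf: "(\<lambda>t. WW l t *\<^sub>R (indicator {0..} t *\<^sub>R (1 / (t + x) powr 2)))
        = (\<lambda>t. indicator {0..} t * (WW l t / (t + x)^2))"
    proof
      fix t :: real
      show "WW l t *\<^sub>R (indicator {0..} t *\<^sub>R (1 / (t + x) powr 2)) = indicator {0..} t * (WW l t / (t + x)^2)"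
      proof (cases "0 \<le> t")
        case True
        then have "(t + x) powr 2 = (t + x)^2" using x by simp
        then show ?thesis using True by (simp add: indicator_def)
      qed (simp add: indicator_def)
    qed
    have m[measurable]: "(\<lambda>t. indicator {0..} t * (WW l t / (t + x)^2)) \<in> borel_measurable lborel" by measurable
    have nn: "(\<integral>\<^sup>+ t. ennreal (indicator {0..} t * (WW l t / (t + x)^2)) \<partial>lborel) = ennreal (ln (g_lam l x))"
      by (rule partA_nn(1)[OF l x])
    have nonneg: "AE t in lborel. 0 \<le> indicator {0..} t * (WW l t / (t + x)^2)"
      using x by (intro AE_I2) (auto simp: indicator_def intro!: divide_nonneg_nonneg WW_nonneg[OF l])
    have int: "integrable lborel (\<lambda>t. indicator {0..} t * (WW l t / (t + x)^2))"
      by (rule integrableI_nn_integral_finite[OF m nonneg nn])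
    have val: "(\<integral>t. indicator {0..} t * (WW l t / (t + x)^2) \<partial>lborel) = ln (g_lam l x)"
      using integral_eq_nn_integral[OF m nonneg] nn partA_nn(2)[OF l x] by simp
    have wm: "(\<lambda>t. WW l t) \<in> borel_measurable lborel" by measurable
    have wnn: "AE t in lborel. 0 \<le> WW l t" by (intro AE_I2 WW_nonneg[OF l])
    have fm: "(\<lambda>t. indicator {0..} t *\<^sub>R (1 / (t + x) powr 2)) \<in> borel_measurable lborel"
      by measurable
    have si: "set_integrable \<mu> {0..} (\<lambda>t. 1 / (t + x) powr 2)"
      unfolding set_integrable_def \<mu>_def integrable_density[OF fm wm wnn] eqf using int .
    have sv: "(\<integral>t\<in>{0..}. 1 / (t + x) powr 2 \<partial>\<mu>) = ln (g_lam l x)"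
      unfolding set_lebesgue_integral_def \<mu>_def integral_density[OF fm wm wnn] eqf using val .
    show ?thesis using si sv by simp
  qed
  show ?thesis unfolding gen_stieltjes_def
    by (intro CollectI exI[of _ \<mu>] exI[of _ 0]) (use s\<mu> e0 key in auto)
qed

definition Bc :: "real \<Rightarrow> ennreal" where
  "Bc \<tau> = (\<integral>\<^sup>+ v. ennreal (indicator {0<..} v * (v powr (1 - \<tau>) / (1 + v)^2)) \<partial>lborel)"

definition C2 :: "real \<Rightarrow> ennreal" where
  "C2 \<tau> = (\<integral>\<^sup>+ v. ennreal (if 0 < v \<and> v < 1 then (1 - v) powr (\<tau> - 2) * v powr (1 - \<tau>) else 0) \<partial>lborel)"

lemma inner1:
  assumes x: "0 < x"
  shows "(\<integral>\<^sup>+ s. ennreal (indicator {0..} s / (s + x)^2) * ennreal (if 0 \<le> t \<and> t < s then (s - t) powr (1 - \<tau>) else 0) \<partial>lborel)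
       = Bc \<tau> * ennreal (indicator {0..} t * (1 / (t + x) powr \<tau>))"
proof (cases "0 \<le> t")
  case False
  then show ?thesis by simp
next
  case True
  define c where "c = t + x"
  have c: "0 < c" using True x by (simp add: c_def)
  define f where "f s = ennreal (indicator {0..} s / (s + x)^2) * ennreal (if 0 \<le> t \<and> t < s then (s - t) powr (1 - \<tau>) else 0)" for s
  have fm: "f \<in> borel_measurable borel" unfolding f_def by measurable
  have "(\<integral>\<^sup>+ s. f s \<partial>lborel) = ennreal \<bar>c\<bar> * (\<integral>\<^sup>+ v. f (t + c * v) \<partial>lborel)"
    using c by (intro nn_integral_real_affine[OF fm]) simp
  also have "(\<integral>\<^sup>+ v. f (t + c * v) \<partial>lborel)
     = (\<integral>\<^sup>+ v. ennreal (c powr (- 1 - \<tau>)) * ennreal (indicator {0<..} v * (v powr (1 - \<tau>) / (1 + v)^2)) \<partial>lborel)"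
  proof (intro nn_integral_cong)
    fix v :: real
    show "f (t + c * v) = ennreal (c powr (- 1 - \<tau>)) * ennreal (indicator {0<..} v * (v powr (1 - \<tau>) / (1 + v)^2))"
    proof (cases "0 < v")
      case False
      then have "\<not> t < t + c * v" using c by (simp add: mult_le_0_iff not_less)
      then show ?thesis using False by (simp add: f_def)
    next
      case v: True
      have cv: "0 < c * v" using c v by simp
      have pos: "0 \<le> t + c * v" using True cv by simp
      have sx: "t + c * v + x = c * (1 + v)" by (simp add: c_def algebra_simps)
      have val: "1 / (c * (1 + v))^2 * (c * v) powr (1 - \<tau>) = c powr (- 1 - \<tau>) * (v powr (1 - \<tau>) / (1 + v)^2)"
      proof -
        have p1: "(c * v) powr (1 - \<tau>) = c powr (1 - \<tau>) * v powr (1 - \<tau>)" using c v by (simp add: powr_mult)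
        have p2: "c powr (- 1 - \<tau>) = c powr (1 - \<tau>) / c^2"
        proof -
          have "c powr (- 1 - \<tau>) = c powr ((1 - \<tau>) + (- 2))" by simp
          also have "\<dots> = c powr (1 - \<tau>) * c powr (- 2)" by (rule powr_add)
          also have "c powr (- 2) = 1 / c^2" using c by (simp add: powr_minus divide_simps)
          finally show ?thesis by simp
        qed
        have p3: "(c * (1 + v))^2 = c^2 * (1 + v)^2" by (simp add: power_mult_distrib)
        have nz: "c \<noteq> 0" "1 + v \<noteq> 0" using c v by auto
        show ?thesis unfolding p1 p2 p3 using nz by (simp add: field_simps)
      qed
      have "f (t + c * v) = ennreal (1 / (c * (1 + v))^2) * ennreal ((c * v) powr (1 - \<tau>))"
        using pos cv True by (simp add: f_def sx indicator_def)
      also have "\<dots> = ennreal (1 / (c * (1 + v))^2 * (c * v) powr (1 - \<tau>))"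
        by (rule ennreal_mult[symmetric]) auto
      also have "\<dots> = ennreal (c powr (- 1 - \<tau>) * (v powr (1 - \<tau>) / (1 + v)^2))" by (simp only: val)
      also have "\<dots> = ennreal (c powr (- 1 - \<tau>)) * ennreal (v powr (1 - \<tau>) / (1 + v)^2)"
        by (rule ennreal_mult) auto
      finally show ?thesis using v by simp
    qed
  qed
  also have "\<dots> = ennreal (c powr (- 1 - \<tau>)) * Bc \<tau>"
    unfolding Bc_def by (rule nn_integral_cmult) measurable
  finally have "(\<integral>\<^sup>+ s. f s \<partial>lborel) = ennreal c * ennreal (c powr (- 1 - \<tau>)) * Bc \<tau>"
    using c by (simp add: mult.assoc)
  also have "ennreal c * ennreal (c powr (- 1 - \<tau>)) = ennreal (1 / c powr \<tau>)"
  proof -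
    have "c powr (1 + (- 1 - \<tau>)) = c powr 1 * c powr (- 1 - \<tau>)" by (rule powr_add)
    then have "c * c powr (- 1 - \<tau>) = c powr (1 + (- 1 - \<tau>))" using c by simp
    also have "\<dots> = 1 / c powr \<tau>" by (simp add: powr_minus divide_simps)
    finally show ?thesis using c by (simp add: ennreal_mult[symmetric])
  qed
  finally show ?thesis using True by (simp add: f_def c_def mult.commute)
qed

lemma inner2:
  assumes r: "0 < r"
  shows "(\<integral>\<^sup>+ s. ennreal (if 0 \<le> s \<and> s < r then (r - s) powr (\<tau> - 2) else 0) * ennreal (if 0 \<le> t \<and> t < s then (s - t) powr (1 - \<tau>) else 0) \<partial>lborel)
       = C2 \<tau> * indicator {0..<r} t"
proof (cases "0 \<le> t \<and> t < r")
  case False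
  then have z: "(\<lambda>s. ennreal (if 0 \<le> s \<and> s < r then (r - s) powr (\<tau> - 2) else 0) * ennreal (if 0 \<le> t \<and> t < s then (s - t) powr (1 - \<tau>) else 0)) = (\<lambda>s. 0)"
    by (intro ext) auto
  show ?thesis using False by (simp only: z) (simp add: indicator_def)
next
  case True
  define c where "c = r - t"
  have c: "0 < c" using True by (simp add: c_def)
  define f where "f s = ennreal (if 0 \<le> s \<and> s < r then (r - s) powr (\<tau> - 2) else 0) * ennreal (if 0 \<le> t \<and> t < s then (s - t) powr (1 - \<tau>) else 0)" for s
  have fm: "f \<in> borel_measurable borel" unfolding f_def by measurable
  have "(\<integral>\<^sup>+ s. f s \<partial>lborel) = ennreal \<bar>c\<bar> * (\<integral>\<^sup>+ v. f (t + c * v) \<partial>lborel)"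
    using c by (intro nn_integral_real_affine[OF fm]) simp
  also have "(\<integral>\<^sup>+ v. f (t + c * v) \<partial>lborel)
     = (\<integral>\<^sup>+ v. ennreal (1 / c) * ennreal (if 0 < v \<and> v < 1 then (1 - v) powr (\<tau> - 2) * v powr (1 - \<tau>) else 0) \<partial>lborel)"
  proof (intro nn_integral_cong)
    fix v :: real
    show "f (t + c * v) = ennreal (1 / c) * ennreal (if 0 < v \<and> v < 1 then (1 - v) powr (\<tau> - 2) * v powr (1 - \<tau>) else 0)"
    proof (cases "0 < v \<and> v < 1")
      case False
      have "\<not> (t < t + c * v \<and> t + c * v < r)"
      proof (cases "v \<le> 0")
        case True
        then have "c * v \<le> 0" using c by (simp add: mult_nonneg_nonpos)
        then show ?thesis by simp
      next
        case vn: False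
        then have "1 \<le> v" using False by auto
        then have "c * 1 \<le> c * v" using c by (intro mult_left_mono) auto
        then show ?thesis by (simp add: c_def)
      qed
      then show ?thesis using False by (auto simp: f_def)
    next
      case v: True
      have cv: "0 < c * v" using c v by simp
      have l1: "t + c * v < r"
      proof -
        have "c * v < c * 1" using c v by (intro mult_strict_left_mono) auto
        then show ?thesis by (simp add: c_def)
      qed
      have rs: "r - (t + c * v) = c * (1 - v)" by (simp add: c_def algebra_simps)
      have val: "(c * (1 - v)) powr (\<tau> - 2) * (c * v) powr (1 - \<tau>) = 1 / c * ((1 - v) powr (\<tau> - 2) * v powr (1 - \<tau>))"
      proof -
        have "(c * (1 - v)) powr (\<tau> - 2) * (c * v) powr (1 - \<tau>)
            = (c powr (\<tau> - 2) * c powr (1 - \<tau>)) * ((1 - v) powr (\<tau> - 2) * v powr (1 - \<tau>))"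
          using c v by (simp add: powr_mult)
        also have "c powr (\<tau> - 2) * c powr (1 - \<tau>) = 1 / c"
        proof -
          have "c powr (\<tau> - 2) * c powr (1 - \<tau>) = c powr (- 1)" by (simp add: powr_add[symmetric])
          then show ?thesis using c by (simp add: powr_minus inverse_eq_divide)
        qed
        finally show ?thesis .
      qed
      have "f (t + c * v) = ennreal ((c * (1 - v)) powr (\<tau> - 2)) * ennreal ((c * v) powr (1 - \<tau>))"
        using True cv l1 by (simp add: f_def rs)
      also have "\<dots> = ennreal (1 / c * ((1 - v) powr (\<tau> - 2) * v powr (1 - \<tau>)))"
        by (simp add: ennreal_mult[symmetric] val)
      also have "\<dots> = ennreal (1 / c) * ennreal ((1 - v) powr (\<tau> - 2) * v powr (1 - \<tau>))"
        by (rule ennreal_mult) (use c in auto)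
      finally show ?thesis using v by simp
    qed
  qed
  also have "\<dots> = ennreal (1 / c) * C2 \<tau>"
    unfolding C2_def by (rule nn_integral_cmult) measurable
  finally have "(\<integral>\<^sup>+ s. f s \<partial>lborel) = ennreal c * ennreal (1 / c) * C2 \<tau>"
    using c by (simp add: mult.assoc)
  also have "ennreal c * ennreal (1 / c) = 1"
    using c by (simp add: ennreal_mult[symmetric])
  finally show ?thesis using True by (simp add: f_def indicator_def)
qed

lemma Bc_fin_pos:
  assumes \<tau>: "0 < \<tau>" "\<tau> < 2"
  shows "Bc \<tau> < \<infinity>" "0 < Bc \<tau>"
proof -
  have i1: "(\<integral>\<^sup>+ v. ennreal (indicator {0..1} v * v powr (1 - \<tau>)) \<partial>lborel) = ennreal (1 powr (1 - \<tau> + 1) / (1 - \<tau> + 1))"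
    using \<tau> by (intro nn_integral_has_integral_lebesgue has_integral_powr_from_0) auto
  have i2: "(\<integral>\<^sup>+ v. ennreal (indicator {1..} v * v powr (- 1 - \<tau>)) \<partial>lborel) = ennreal (- (1 powr (- 1 - \<tau> + 1)) / (- 1 - \<tau> + 1))"
    using \<tau> by (intro nn_integral_has_integral_lebesgue has_integral_powr_to_inf) auto
  have "Bc \<tau> \<le> (\<integral>\<^sup>+ v. ennreal (indicator {0..1} v * v powr (1 - \<tau>)) + ennreal (indicator {1..} v * v powr (- 1 - \<tau>)) \<partial>lborel)"
    unfolding Bc_def
  proof (intro nn_integral_mono)
    fix v :: real
    show "ennreal (indicator {0<..} v * (v powr (1 - \<tau>) / (1 + v)^2))
        \<le> ennreal (indicator {0..1} v * v powr (1 - \<tau>)) + ennreal (indicator {1..} v * v powr (- 1 - \<tau>))"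
    proof (cases "0 < v")
      case False then show ?thesis by simp
    next
      case v: True
      have d: "1 \<le> (1 + v)^2" using v by simp
      show ?thesis
      proof (cases "v \<le> 1")
        case True
        have "v powr (1 - \<tau>) / (1 + v)^2 \<le> v powr (1 - \<tau>)"
          using d by (simp add: divide_le_eq mult_le_cancel_left1 less_le_trans[OF zero_less_one])
        then show ?thesis using v True by (simp add: indicator_def add_increasing2 ennreal_leI)
      next
        case False
        have "v powr (1 - \<tau>) / (1 + v)^2 \<le> v powr (1 - \<tau>) / v^2"
          using v by (intro divide_left_mono) (auto intro!: power_mono mult_pos_pos)
        also have "v powr (1 - \<tau>) / v^2 = v powr (- 1 - \<tau>)"
        proof -
          have "v powr (- 1 - \<tau>) = v powr (1 - \<tau>) * v powr (- 2)" by (simp add: powr_add[symmetric])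
          also have "v powr (- 2) = 1 / v^2" using v by (simp add: powr_minus divide_simps)
          finally show ?thesis by simp
        qed
        finally show ?thesis using v False by (simp add: indicator_def add_increasing ennreal_leI)
      qed
    qed
  qed
  also have "\<dots> = (\<integral>\<^sup>+ v. ennreal (indicator {0..1} v * v powr (1 - \<tau>)) \<partial>lborel) + (\<integral>\<^sup>+ v. ennreal (indicator {1..} v * v powr (- 1 - \<tau>)) \<partial>lborel)"
    by (rule nn_integral_add) measurable
  also have "\<dots> < \<infinity>" unfolding i1 i2 by simp
  finally show "Bc \<tau> < \<infinity>" .
  have "(\<integral>\<^sup>+ v. ennreal (1 / 18) * indicator {1..2::real} v \<partial>lborel) \<le> Bc \<tau>"
    unfolding Bc_def
  proof (intro nn_integral_mono)
    fix v :: real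
    show "ennreal (1 / 18) * indicator {1..2::real} v \<le> ennreal (indicator {0<..} v * (v powr (1 - \<tau>) / (1 + v)^2))"
    proof (cases "v \<in> {1..2}")
      case False then show ?thesis by simp
    next
      case True
      then have v: "1 \<le> v" "v \<le> 2" by auto
      have p: "v powr (- 1) \<le> v powr (1 - \<tau>)" using v \<tau> by (intro powr_mono) auto
      have "1 / 2 \<le> v powr (- 1)" using v by (simp add: powr_minus divide_simps)
      then have a: "1 / 2 \<le> v powr (1 - \<tau>)" using p by linarith
      have b: "(1 + v)^2 \<le> 9" using v power_mono[of "1 + v" 3 2] by simp
      have "1 / 18 \<le> v powr (1 - \<tau>) / (1 + v)^2"
      proof -
        have "1 / 18 = (1 / 2) / (9::real)" by simp
        also have "\<dots> \<le> v powr (1 - \<tau>) / 9" using a by (simp add: divide_right_mono)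
        also have "\<dots> \<le> v powr (1 - \<tau>) / (1 + v)^2" using b v by (intro divide_left_mono) auto
        finally show ?thesis .
      qed
      then show ?thesis using True v by (simp add: indicator_def ennreal_leI)
    qed
  qed
  moreover have "(\<integral>\<^sup>+ v. ennreal (1 / 18) * indicator {1..2::real} v \<partial>lborel) = ennreal (1 / 18)"
    by (simp add: nn_integral_cmult_indicator)
  ultimately show "0 < Bc \<tau>" by (metis ennreal_zero_less_divide not_le order.strict_trans1 zero_less_numeral zero_less_one divide_pos_pos ennreal_less_zero_iff)
qed

definition LP :: "(real \<Rightarrow> ennreal) \<Rightarrow> real \<Rightarrow> ennreal" where
  "LP P u = (\<integral>\<^sup>+ s. indicator {0..} s * ennreal (exp (- u * s)) * P s \<partial>lborel)"

lemma LP_meas: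
  assumes [measurable]: "P \<in> borel_measurable borel"
  shows "LP P \<in> borel_measurable borel"
  unfolding LP_def
  by (rule sigma_finite_measure.borel_measurable_nn_integral[OF lborel.sigma_finite_measure_axioms]) measurable

lemma layer1:
  assumes Pm[measurable]: "P \<in> borel_measurable borel" and x: "0 < x"
  shows "(\<integral>\<^sup>+ s. ennreal (indicator {0..} s / (s + x)^2) * P s \<partial>lborel)
       = (\<integral>\<^sup>+ u. indicator {0..} u * ennreal (exp (- x * u)) * (ennreal u * LP P u) \<partial>lborel)"
proof -
  define g where "g s u = ennreal (indicator {0..} u * (u * exp (- (s + x) * u))) * (indicator {0..} s * P s)" for s u
  have gm: "case_prod (\<lambda>u s. g s u) \<in> borel_measurable (lborel \<Otimes>\<^sub>M lborel)"
    unfolding g_def by measurable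
  have k: "ennreal (indicator {0..} s / (s + x)^2) * P s = (\<integral>\<^sup>+ u. g s u \<partial>lborel)" for s
  proof (cases "0 \<le> s")
    case True
    have "(\<integral>\<^sup>+ u. g s u \<partial>lborel) = (\<integral>\<^sup>+ u. ennreal (indicator {0..} u * (u * exp (- (s + x) * u))) \<partial>lborel) * (indicator {0..} s * P s)"
      unfolding g_def by (rule nn_integral_multc) measurable
    also have "\<dots> = ennreal (1 / (s + x)^2) * (indicator {0..} s * P s)"
      using True x by (subst laplace_kernel) auto
    finally show ?thesis using True by simp
  next
    case False
    then show ?thesis by (simp add: g_def)
  qed
  have "(\<integral>\<^sup>+ s. ennreal (indicator {0..} s / (s + x)^2) * P s \<partial>lborel) = (\<integral>\<^sup>+ s. (\<integral>\<^sup>+ u. g s u \<partial>lborel) \<partial>lborel)"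
    by (simp only: k)
  also have "\<dots> = (\<integral>\<^sup>+ u. (\<integral>\<^sup>+ s. g s u \<partial>lborel) \<partial>lborel)"
    by (rule lborel_pair.Fubini'[OF gm])
  also have "\<dots> = (\<integral>\<^sup>+ u. indicator {0..} u * ennreal (exp (- x * u)) * (ennreal u * LP P u) \<partial>lborel)"
  proof (intro nn_integral_cong)
    fix u :: real
    have gs: "g s u = (indicator {0..} u * ennreal (exp (- x * u)) * ennreal u) * (indicator {0..} s * ennreal (exp (- u * s)) * P s)" for s
    proof (cases "0 \<le> u")
      case True
      have "ennreal (u * exp (- (s + x) * u)) = ennreal (exp (- x * u)) * ennreal u * ennreal (exp (- u * s))"
      proof -
        have e: "exp (- (s + x) * u) = exp (- x * u) * exp (- u * s)"
          by (simp add: exp_add[symmetric] algebra_simps)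
        have "ennreal (u * exp (- (s + x) * u)) = ennreal u * ennreal (exp (- (s + x) * u))"
          using True by (intro ennreal_mult) auto
        also have "ennreal (exp (- (s + x) * u)) = ennreal (exp (- x * u)) * ennreal (exp (- u * s))"
          unfolding e by (intro ennreal_mult) auto
        finally show ?thesis by (simp add: mult_ac)
      qed
      then show ?thesis using True unfolding g_def by (simp add: mult_ac)
    next
      case False
      then show ?thesis by (simp add: g_def)
    qed
    show "(\<integral>\<^sup>+ s. g s u \<partial>lborel) = indicator {0..} u * ennreal (exp (- x * u)) * (ennreal u * LP P u)"
      unfolding gs LP_def by (subst nn_integral_cmult) (measurable, simp add: mult_ac)
  qed
  finally show ?thesis .
qed

definition Acl :: "real \<Rightarrow> real \<Rightarrow> real \<Rightarrow> real" where
  "Acl l a r = (1 - l) * (- r * (r - l) powr a / a + (r - l) powr (a + 1) / (a + 1) + r * r powr a / a - r powr (a + 1) / (a + 1))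
     + l * ((1 - r) * (r - l) powr a / a + (r - l) powr (a + 1) / (a + 1))"

lemma Acl_integral:
  assumes l: "0 < l" "l < 1" and r: "l < r" "r \<le> 1" and a: "0 < a" "a < 1"
  shows "((\<lambda>s. (r - s) powr (a - 1) * wlam l s) has_integral Acl l a r) {0..r}"
proof -
  define G1 where "G1 s = - r * (r - s) powr a / a + (r - s) powr (a + 1) / (a + 1)" for s
  define G2 where "G2 s = - (1 - r) * (r - s) powr a / a - (r - s) powr (a + 1) / (a + 1)" for s
  have pw: "(r - s) powr a = (r - s) * (r - s) powr (a - 1)" if "s < r" for s
  proof -
    have "(r - s) powr a = (r - s) powr ((a - 1) + 1)" by simp
    also have "\<dots> = (r - s) powr (a - 1) * (r - s) powr 1" by (rule powr_add)
    finally show ?thesis using that by simp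
  qed
  have d1: "(G1 has_vector_derivative ((r - s) powr (a - 1) * ((1 - l) * s) / (1 - l))) (at s within {0..l})"
    if s: "s \<in> {0..l}" for s
  proof -
    have sr: "s < r" using s r by auto
    have "(G1 has_real_derivative (r * (r - s) powr (a - 1) - (r - s) powr a)) (at s within {0..l})"
      unfolding G1_def using sr a by (auto intro!: derivative_eq_intros; auto simp: field_simps)
    moreover have "r * (r - s) powr (a - 1) - (r - s) powr a = (r - s) powr (a - 1) * ((1 - l) * s) / (1 - l)"
    proof -
      have e: "(r - s) powr (a - 1) * ((1 - l) * s) / (1 - l) = s * (r - s) powr (a - 1)"
        using l by simp
      show ?thesis unfolding e pw[OF sr] by (simp add: algebra_simps)
    qed
    ultimately show ?thesis by (simp add: has_real_derivative_iff_has_vector_derivative)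
  qed
  have d2: "(G2 has_vector_derivative ((r - s) powr (a - 1) * (l * (1 - s)) / l)) (at s)"
    if s: "s \<in> {l<..<r}" for s
  proof -
    have sr: "s < r" using s by auto
    have "(G2 has_real_derivative ((1 - r) * (r - s) powr (a - 1) + (r - s) powr a)) (at s)"
      unfolding G2_def using sr a by (auto intro!: derivative_eq_intros; auto simp: field_simps)
    moreover have "(1 - r) * (r - s) powr (a - 1) + (r - s) powr a = (r - s) powr (a - 1) * (l * (1 - s)) / l"
    proof -
      have e: "(r - s) powr (a - 1) * (l * (1 - s)) / l = (1 - s) * (r - s) powr (a - 1)"
        using l by simp
      show ?thesis unfolding e pw[OF sr] by (simp add: algebra_simps)
    qed
    ultimately show ?thesis by (simp add: has_real_derivative_iff_has_vector_derivative)
  qed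
  have c2: "continuous_on {l..r} G2"
    unfolding G2_def using a by (intro continuous_intros continuous_on_powr') auto
  have i1: "((\<lambda>s. (r - s) powr (a - 1) * ((1 - l) * s) / (1 - l)) has_integral (G1 l - G1 0)) {0..l}"
    using l d1 by (intro fundamental_theorem_of_calculus) auto
  have i2: "((\<lambda>s. (r - s) powr (a - 1) * (l * (1 - s)) / l) has_integral (G2 r - G2 l)) {l..r}"
    using r d2 c2 by (intro fundamental_theorem_of_calculus_interior) auto
  have i1': "((\<lambda>s. (r - s) powr (a - 1) * wlam l s) has_integral (1 - l) * (G1 l - G1 0)) {0..l}"
  proof -
    have "((\<lambda>s. (1 - l) * ((r - s) powr (a - 1) * ((1 - l) * s) / (1 - l))) has_integral (1 - l) * (G1 l - G1 0)) {0..l}"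
      using has_integral_mult_right[OF i1] .
    then show ?thesis
      by (rule has_integral_eq[rotated]) (use l in \<open>auto simp: wlam_def\<close>)
  qed
  have i2': "((\<lambda>s. (r - s) powr (a - 1) * wlam l s) has_integral l * (G2 r - G2 l)) {l..r}"
  proof -
    have "((\<lambda>s. l * ((r - s) powr (a - 1) * (l * (1 - s)) / l)) has_integral l * (G2 r - G2 l)) {l..r}"
      using has_integral_mult_right[OF i2] .
    then show ?thesis
      by (rule has_integral_eq[rotated]) (use l in \<open>auto simp: wlam_def\<close>)
  qed
  have "((\<lambda>s. (r - s) powr (a - 1) * wlam l s) has_integral (1 - l) * (G1 l - G1 0) + l * (G2 r - G2 l)) {0..r}"
    using l r by (intro has_integral_combine[OF _ _ i1' i2']) auto
  moreover have "(1 - l) * (G1 l - G1 0) + l * (G2 r - G2 l) = Acl l a r"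
  proof -
    have nz: "a \<noteq> 0" "a + 1 \<noteq> 0" using a by auto
    have z: "G2 r = 0" unfolding G2_def by simp
    show ?thesis unfolding z unfolding G1_def G2_def Acl_def using nz
      by (simp add: divide_simps; algebra)
  qed
  ultimately show ?thesis by simp
qed

lemma Acl_dec:
  assumes l: "0 < l" "l < 1" and a: "0 < a" "a < 1"
  shows "\<exists>r1. l < r1 \<and> r1 < 1 \<and> Acl l a 1 < Acl l a r1"
proof -
  define \<mu> where "\<mu> = 1 - l"
  have \<mu>: "0 < \<mu>" "\<mu> < 1" using l by (auto simp: \<mu>_def)
  define D where "D = (1 - l) * (- ((1 - l) powr a + a * (1 - l) powr (a - 1)) / a + (1 - l) powr a + (1 + a) / a - 1)
      + l * (- ((1 - l) powr a) / a + (1 - l) powr a)"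
  have der: "(Acl l a has_real_derivative D) (at 1)"
    unfolding Acl_def D_def using l a
    by (auto intro!: derivative_eq_intros; auto simp: field_simps)
  have pw: "\<mu> powr a = \<mu> * \<mu> powr (a - 1)"
  proof -
    have "\<mu> powr a = \<mu> powr ((a - 1) + 1)" by simp
    also have "\<dots> = \<mu> powr (a - 1) * \<mu> powr 1" by (rule powr_add)
    finally show ?thesis using \<mu> by simp
  qed
  have Dv: "D = (\<mu> - \<mu> powr a) / a"
  proof -
    have "D = \<mu> * (- (\<mu> powr a + a * \<mu> powr (a - 1)) / a + \<mu> powr a + (1 + a) / a - 1)
      + (1 - \<mu>) * (- (\<mu> powr a) / a + \<mu> powr a)" by (simp add: D_def \<mu>_def)
    also have "\<dots> = (\<mu> - \<mu> powr a) / a"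
      using a unfolding pw by (simp add: divide_simps; algebra)
    finally show ?thesis .
  qed
  have "\<mu> powr 1 < \<mu> powr a" using \<mu> a by (intro powr_less_mono') auto
  then have Dneg: "D < 0" using \<mu> a by (simp add: Dv divide_neg_pos)
  obtain d where d: "d > 0" "\<And>h. h > 0 \<Longrightarrow> h < d \<Longrightarrow> Acl l a 1 < Acl l a (1 - h)"
    using DERIV_neg_dec_left[OF der Dneg] by blast
  define h where "h = min (d / 2) ((1 - l) / 2)"
  have h1: "h \<le> d / 2" "h \<le> (1 - l) / 2" unfolding h_def by (rule min.cobounded1, rule min.cobounded2)
  have h0: "h > 0" using d l by (simp add: h_def)
  have h2: "h < d" using d h1 by linarith
  have "(1 - l) / 2 < 1 - l" using l by simp
  then have h3: "h < 1 - l" using h1(2) by (rule le_less_trans[rotated])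
  note h = h0 h2 h3
  show ?thesis
    by (rule exI[of _ "1 - h"]) (use h d(2)[of h] in auto)
qed

lemma Vt_nonneg_mono:
  assumes "\<tau> \<le> 1" "s1 \<le> s2"
  shows "ennreal (if 0 \<le> t \<and> t < s1 then (s1 - t) powr (1 - \<tau>) else 0) \<le> ennreal (if 0 \<le> t \<and> t < s2 then (s2 - t) powr (1 - \<tau>) else 0)"
proof (cases "0 \<le> t \<and> t < s1")
  case True
  then have "(s1 - t) powr (1 - \<tau>) \<le> (s2 - t) powr (1 - \<tau>)" using assms by (intro powr_mono2) auto
  then show ?thesis using True assms by (auto intro!: ennreal_leI)
qed auto

lemma WW_on01: "0 \<le> s \<Longrightarrow> s < 1 \<Longrightarrow> WW l s = wlam l s"
  by (simp add: WW_def frac_eq)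

lemma WW_one: "0 \<le> l \<Longrightarrow> WW l 1 = 0"
proof -
  assume l0: "0 \<le> l"
  have "frac (1::real) = 0" by (simp add: frac_eq_0_iff)
  then show ?thesis using l0 by (simp add: WW_def wlam_def)
qed

lemma partB:
  fixes \<nu> :: "real measure" and c \<tau> l :: real
  assumes l: "0 < l" "l < 1" and \<tau>: "0 < \<tau>" "\<tau> < 2"
    and s\<nu>: "sets \<nu> = sets borel" and n0: "emeasure \<nu> {..<0} = 0" and c: "0 \<le> c"
    and rep: "\<forall>x>0. set_integrable \<nu> {0..} (\<lambda>t. 1 / (t + x) powr \<tau>) \<and>
                ln (g_lam l x) = (\<integral>t\<in>{0..}. 1 / (t + x) powr \<tau> \<partial>\<nu>) + c"
  shows False
proof -
  define F where "F x = ln (g_lam l x)" for x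
  define K where "K x = (\<integral>\<^sup>+ t. ennreal (indicator {0..} t * (1 / (t + x) powr \<tau>)) \<partial>\<nu>)" for x
  have mnu: "measurable \<nu> = measurable borel" by (intro ext measurable_cong_sets[OF s\<nu> refl])
  have Kx: "K x = ennreal (F x - c) \<and> c \<le> F x" if x: "0 < x" for x
  proof -
    from rep x have si: "set_integrable \<nu> {0..} (\<lambda>t. 1 / (t + x) powr \<tau>)"
      and fe: "F x = (\<integral>t\<in>{0..}. 1 / (t + x) powr \<tau> \<partial>\<nu>) + c" by (auto simp: F_def)
    have int: "integrable \<nu> (\<lambda>t. indicator {0..} t * (1 / (t + x) powr \<tau>))"
      using si by (simp add: set_integrable_def)
    have nn: "AE t in \<nu>. 0 \<le> indicator {0..} t * (1 / (t + x) powr \<tau>)" by (intro AE_I2) simp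
    have "K x = ennreal (\<integral>t. indicator {0..} t * (1 / (t + x) powr \<tau>) \<partial>\<nu>)"
      unfolding K_def by (rule nn_integral_eq_integral[OF int nn])
    moreover have "(\<integral>t\<in>{0..}. 1 / (t + x) powr \<tau> \<partial>\<nu>) = (\<integral>t. indicator {0..} t * (1 / (t + x) powr \<tau>) \<partial>\<nu>)"
      by (simp add: set_lebesgue_integral_def)
    moreover have "0 \<le> (\<integral>t. indicator {0..} t * (1 / (t + x) powr \<tau>) \<partial>\<nu>)"
      by (rule integral_nonneg_AE[OF nn])
    ultimately show ?thesis using fe by simp
  qed
  have Fle: "F x \<le> 1 / x" if x: "0 < x" for x
  proof -
    have "ennreal (F x) = (\<integral>\<^sup>+ t. ennreal (indicator {0..} t * (WW l t / (t + x)^2)) \<partial>lborel)"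
      using partA_nn(1)[OF l x] by (simp add: F_def)
    also have "\<dots> \<le> (\<integral>\<^sup>+ t. ennreal (indicator {0..} t * (1 / (t + x)^2)) \<partial>lborel)"
    proof (intro nn_integral_mono ennreal_leI)
      fix t :: real
      show "indicator {0..} t * (WW l t / (t + x)^2) \<le> indicator {0..} t * (1 / (t + x)^2)"
        using WW_le1[OF l, of t] by (auto simp: indicator_def intro!: divide_right_mono)
    qed
    also have "\<dots> = ennreal (1 / x)"
      using x by (intro nn_integral_has_integral_lebesgue inv_sq_integral) auto
    finally show ?thesis using x by (subst (asm) ennreal_le_iff) auto
  qed
  have c0: "c = 0"
  proof (rule ccontr)
    assume "c \<noteq> 0"
    then have cp: "c > 0" using c by simp
    have "c \<le> F (2 / c)" using Kx[of "2 / c"] cp by simp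
    also have "\<dots> \<le> 1 / (2 / c)" using Fle[of "2 / c"] cp by simp
    also have "\<dots> = c / 2" by simp
    finally show False using cp by simp
  qed
  have KF: "K x = ennreal (F x)" if "0 < x" for x using Kx[OF that] c0 by simp
  have finI: "emeasure \<nu> {..real n} \<noteq> \<infinity>" for n :: nat
  proof
    assume inf: "emeasure \<nu> {..real n} = \<infinity>"
    have sub: "emeasure \<nu> {..real n} \<le> emeasure \<nu> {..<0} + emeasure \<nu> {0..real n}"
    proof -
      have "{..real n} = {..<0} \<union> {0..real n}" by auto
      then show ?thesis using emeasure_subadditive[of "{..<0}" \<nu> "{0..real n}"] s\<nu> by simp
    qed
    then have inf2: "emeasure \<nu> {0..real n} = \<infinity>" using inf n0 by (simp add: top_unique)
    have "ennreal ((real n + 1) powr (- \<tau>)) * emeasure \<nu> {0..real n} = (\<integral>\<^sup>+ t. ennreal ((real n + 1) powr (- \<tau>)) * indicator {0..real n} t \<partial>\<nu>)"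
      using s\<nu> by (subst nn_integral_cmult_indicator) auto
    also have "\<dots> \<le> K 1"
      unfolding K_def
    proof (intro nn_integral_mono)
      fix t :: real
      show "ennreal ((real n + 1) powr (- \<tau>)) * indicator {0..real n} t \<le> ennreal (indicator {0..} t * (1 / (t + 1) powr \<tau>))"
      proof (cases "t \<in> {0..real n}")
        case True
        have "(real n + 1) powr (- \<tau>) \<le> (t + 1) powr (- \<tau>)"
          using True \<tau> by (intro powr_mono2') auto
        then show ?thesis using True by (simp add: indicator_def powr_minus divide_simps ennreal_leI)
      qed simp
    qed
    also have "\<dots> < \<infinity>" using KF[of 1] by simp
    finally show False using inf2 by (simp add: ennreal_mult_eq_top_iff)
  qed
  have sf: "sigma_finite_measure \<nu>"
  proof (unfold_locales, intro exI[of _ "range (\<lambda>n::nat. {..real n})"] conjI)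
    show "countable (range (\<lambda>n::nat. {..real n}))" by (rule countable_image) simp
    show "range (\<lambda>n::nat. {..real n}) \<subseteq> sets \<nu>" using s\<nu> by (simp add: image_subset_iff)
    show "\<Union> (range (\<lambda>n::nat. {..real n})) = space \<nu>"
    proof -
      have "t \<in> \<Union> (range (\<lambda>n::nat. {..real n}))" for t :: real
      proof -
        obtain n :: nat where "t \<le> real n" using real_arch_simple by blast
        then show ?thesis by auto
      qed
      then show ?thesis using sets_eq_imp_space_eq[OF s\<nu>] by auto
    qed
    show "\<forall>a\<in>range (\<lambda>n::nat. {..real n}). emeasure \<nu> a \<noteq> \<infinity>" using finI by blast
  qed
  interpret \<nu>: sigma_finite_measure \<nu> by (rule sf)
  have psf: "pair_sigma_finite \<nu> lborel"
    by (simp add: pair_sigma_finite_def sf lborel.sigma_finite_measure_axioms)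
  interpret p\<nu>: pair_sigma_finite \<nu> lborel by (rule psf)
  have m1: "measurable (borel \<Otimes>\<^sub>M \<nu>) = measurable (borel \<Otimes>\<^sub>M borel)"
    by (intro ext measurable_cong_sets sets_pair_measure_cong s\<nu>) auto
  have m2: "measurable (\<nu> \<Otimes>\<^sub>M lborel) = measurable (borel \<Otimes>\<^sub>M borel)"
    by (intro ext measurable_cong_sets sets_pair_measure_cong s\<nu>) auto
  define h where "h s t = ennreal (if 0 \<le> t \<and> t < s then (s - t) powr (1 - \<tau>) else 0)" for s t
  define Vt where "Vt s = (\<integral>\<^sup>+ t. h s t \<partial>\<nu>)" for s
  have hm: "case_prod h \<in> borel_measurable (borel \<Otimes>\<^sub>M borel)" unfolding h_def by measurable
  have hm1: "(\<lambda>t. h s t) \<in> borel_measurable \<nu>" for s unfolding mnu h_def by measurable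
  have Vtm[measurable]: "Vt \<in> borel_measurable borel"
    unfolding Vt_def by (rule \<nu>.borel_measurable_nn_integral) (use hm in \<open>simp add: m1\<close>)
  have Vt_neg: "Vt s = 0" if "s < 0" for s
  proof -
    have "(\<lambda>t. h s t) = (\<lambda>t. 0)" using that by (auto simp: h_def)
    then show ?thesis by (simp add: Vt_def)
  qed
  \<comment> \<open>the S_2 representation of the S_tau part\<close>
  have K1: "(\<integral>\<^sup>+ s. ennreal (indicator {0..} s / (s + x)^2) * Vt s \<partial>lborel) = Bc \<tau> * K x" if x: "0 < x" for x
  proof -
    define k where "k s = ennreal (indicator {0..} s / (s + x)^2)" for s
    have "(\<integral>\<^sup>+ s. k s * Vt s \<partial>lborel) = (\<integral>\<^sup>+ s. (\<integral>\<^sup>+ t. k s * h s t \<partial>\<nu>) \<partial>lborel)"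
      unfolding Vt_def by (intro nn_integral_cong nn_integral_cmult[symmetric] hm1)
    also have "\<dots> = (\<integral>\<^sup>+ t. (\<integral>\<^sup>+ s. k s * h s t \<partial>lborel) \<partial>\<nu>)"
    proof (rule p\<nu>.Fubini')
      show "case_prod (\<lambda>t s. k s * h s t) \<in> borel_measurable (\<nu> \<Otimes>\<^sub>M lborel)"
        unfolding m2 k_def h_def by measurable
    qed
    also have "\<dots> = (\<integral>\<^sup>+ t. Bc \<tau> * ennreal (indicator {0..} t * (1 / (t + x) powr \<tau>)) \<partial>\<nu>)"
      unfolding k_def h_def by (intro nn_integral_cong inner1[OF x])
    also have "\<dots> = Bc \<tau> * K x"
      unfolding K_def by (rule nn_integral_cmult) (simp add: mnu)
    finally show ?thesis by (simp add: k_def)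
  qed
  obtain b where Bb: "Bc \<tau> = ennreal b" and b: "0 < b"
  proof -
    have "Bc \<tau> \<noteq> \<infinity>" using Bc_fin_pos(1)[OF \<tau>] by simp
    then obtain b where "Bc \<tau> = ennreal b" "0 \<le> b" by (cases "Bc \<tau>") auto
    moreover have "0 < Bc \<tau>" using Bc_fin_pos(2)[OF \<tau>] .
    ultimately show ?thesis using that by (auto simp: ennreal_less_zero_iff)
  qed
  define P1 where "P1 s = Bc \<tau> * ennreal (WW l s)" for s
  have P1m[measurable]: "P1 \<in> borel_measurable borel" unfolding P1_def by measurable
  have E: "(\<integral>\<^sup>+ s. ennreal (indicator {0..} s / (s + x)^2) * P1 s \<partial>lborel) = Bc \<tau> * ennreal (F x)"
       "(\<integral>\<^sup>+ s. ennreal (indicator {0..} s / (s + x)^2) * Vt s \<partial>lborel) = Bc \<tau> * ennreal (F x)"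
    if x: "0 < x" for x
  proof -
    have "(\<integral>\<^sup>+ s. ennreal (indicator {0..} s / (s + x)^2) * P1 s \<partial>lborel)
        = (\<integral>\<^sup>+ s. Bc \<tau> * ennreal (indicator {0..} s * (WW l s / (s + x)^2)) \<partial>lborel)"
    proof (intro nn_integral_cong)
      fix s :: real
      have "ennreal (indicator {0..} s / (s + x)^2) * ennreal (WW l s) = ennreal (indicator {0..} s * (WW l s / (s + x)^2))"
        by (subst ennreal_mult[symmetric]) (auto simp: WW_nonneg[OF l])
      then show "ennreal (indicator {0..} s / (s + x)^2) * P1 s = Bc \<tau> * ennreal (indicator {0..} s * (WW l s / (s + x)^2))"
        by (simp add: P1_def mult_ac)
    qed
    also have "\<dots> = Bc \<tau> * (\<integral>\<^sup>+ s. ennreal (indicator {0..} s * (WW l s / (s + x)^2)) \<partial>lborel)"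
      by (rule nn_integral_cmult) measurable
    also have "\<dots> = Bc \<tau> * ennreal (F x)"
      by (simp only: partA_nn(1)[OF l x] F_def)
    finally show "(\<integral>\<^sup>+ s. ennreal (indicator {0..} s / (s + x)^2) * P1 s \<partial>lborel) = Bc \<tau> * ennreal (F x)" .
    show "(\<integral>\<^sup>+ s. ennreal (indicator {0..} s / (s + x)^2) * Vt s \<partial>lborel) = Bc \<tau> * ennreal (F x)"
      using K1[OF x] KF[OF x] by simp
  qed
  have ae1: "AE u in lborel. 0 \<le> u \<longrightarrow> ennreal u * LP P1 u = ennreal u * LP Vt u"
  proof (rule laplace_unique[of "\<lambda>u. ennreal u * LP P1 u" "\<lambda>u. ennreal u * LP Vt u" 1])
    show "(\<lambda>u. ennreal u * LP P1 u) \<in> borel_measurable borel" using LP_meas[OF P1m] by measurable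
    show "(\<lambda>u. ennreal u * LP Vt u) \<in> borel_measurable borel" using LP_meas[OF Vtm] by measurable
    show "(0::real) < 1" by simp
    fix n :: nat
    have x: "0 < 1 + real n" by simp
    show "(\<integral>\<^sup>+ u. indicator {0..} u * ennreal (exp (- (1 + real n) * u)) * (ennreal u * LP P1 u) \<partial>lborel)
        = (\<integral>\<^sup>+ u. indicator {0..} u * ennreal (exp (- (1 + real n) * u)) * (ennreal u * LP Vt u) \<partial>lborel)"
      using layer1[OF P1m x] layer1[OF Vtm x] E[OF x] by simp
  next
    have x: "0 < 1 + real 0" by simp
    show "(\<integral>\<^sup>+ u. indicator {0..} u * ennreal (exp (- (1 + real 0) * u)) * (ennreal u * LP P1 u) \<partial>lborel) < \<infinity>"
      using layer1[OF P1m x, symmetric] E(1)[OF x] Bb by (simp add: ennreal_mult_less_top)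
  qed
  have ae1': "AE u in lborel. 0 < u \<longrightarrow> LP P1 u = LP Vt u"
  proof (rule AE_mp[OF ae1], intro AE_I2 impI)
    fix u :: real assume e: "0 \<le> u \<longrightarrow> ennreal u * LP P1 u = ennreal u * LP Vt u" and u: "0 < u"
    then have "ennreal (1 / u) * (ennreal u * LP P1 u) = ennreal (1 / u) * (ennreal u * LP Vt u)" by simp
    moreover have "ennreal (1 / u) * ennreal u = 1" using u by (simp add: ennreal_mult[symmetric])
    ultimately show "LP P1 u = LP Vt u" by (simp add: mult.assoc[symmetric])
  qed
  obtain x0 where x0: "0 < x0" "\<And>n::nat. LP P1 (x0 + real n) = LP Vt (x0 + real n)"
  proof -
    have Rm: "Measurable.pred borel (\<lambda>u. LP P1 u = LP Vt u)"
      unfolding pred_def by (rule measurable_equality_set[OF LP_meas[OF P1m] LP_meas[OF Vtm]])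
    show ?thesis using AE_pos_shift[OF Rm ae1'] that by blast
  qed
  have ae2: "AE s in lborel. 0 \<le> s \<longrightarrow> P1 s = Vt s"
  proof (rule laplace_unique[OF P1m Vtm x0(1)])
    fix n :: nat
    show "(\<integral>\<^sup>+ u. indicator {0..} u * ennreal (exp (- (x0 + real n) * u)) * P1 u \<partial>lborel)
        = (\<integral>\<^sup>+ u. indicator {0..} u * ennreal (exp (- (x0 + real n) * u)) * Vt u \<partial>lborel)"
      using x0(2)[of n] by (simp add: LP_def)
  next
    have "(\<integral>\<^sup>+ u. indicator {0..} u * ennreal (exp (- (x0 + real 0) * u)) * P1 u \<partial>lborel)
        \<le> (\<integral>\<^sup>+ u. Bc \<tau> * ennreal (indicator {0..} u * exp (- x0 * u)) \<partial>lborel)"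
    proof (intro nn_integral_mono)
      fix u :: real
      have w: "ennreal (WW l u) \<le> 1" using WW_le1[OF l, of u] by simp
      have k: "ennreal (WW l u) * ennreal (exp (- x0 * u)) \<le> ennreal (exp (- x0 * u))"
        using mult_right_mono[OF w, of "ennreal (exp (- x0 * u))"] by simp
      from k show "indicator {0..} u * ennreal (exp (- (x0 + real 0) * u)) * P1 u \<le> Bc \<tau> * ennreal (indicator {0..} u * exp (- x0 * u))"
        by (cases "0 \<le> u") (auto simp: P1_def mult_ac intro!: mult_left_mono mult_left_le_one_le)
    qed
    also have "\<dots> = Bc \<tau> * (\<integral>\<^sup>+ u. ennreal (indicator {0..} u * exp (- x0 * u)) \<partial>lborel)"
      by (rule nn_integral_cmult) measurable
    also have "\<dots> = Bc \<tau> * ennreal (exp (- x0 * 0) / x0)"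
    proof -
      have "(\<integral>\<^sup>+ u. ennreal (indicator {0..} u * exp (- x0 * u)) \<partial>lborel) = ennreal (exp (- x0 * 0) / x0)"
        by (rule nn_integral_has_integral_lebesgue) (use has_integral_exp_minus_to_infinity[OF x0(1), of 0] in auto)
      then show ?thesis by simp
    qed
    also have "\<dots> < \<infinity>" using Bb by (simp add: ennreal_mult_less_top)
    finally show "(\<integral>\<^sup>+ u. indicator {0..} u * ennreal (exp (- (x0 + real 0) * u)) * P1 u \<partial>lborel) < \<infinity>" .
  qed
  have aeV: "AE s in lborel. Bc \<tau> * ennreal (WW l s) = Vt s"
  proof (rule AE_mp[OF ae2], intro AE_I2 impI)
    fix s :: real assume e: "0 \<le> s \<longrightarrow> P1 s = Vt s"
    show "Bc \<tau> * ennreal (WW l s) = Vt s"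
    proof (cases "0 \<le> s")
      case True then show ?thesis using e by (simp add: P1_def)
    next
      case False then show ?thesis using Vt_neg[of s] by (simp add: WW_def)
    qed
  qed
  show False
  proof (cases "\<tau> \<le> 1")
    case True
    have Vmono: "Vt s1 \<le> Vt s2" if "s1 \<le> s2" for s1 s2
      unfolding Vt_def h_def by (intro nn_integral_mono Vt_nonneg_mono True that)
    define \<delta> where "\<delta> = l * (1 - l) / 2"
    have lp: "0 < l * (1 - l)" using l by simp
    have l2: "l * (1 - l) < l * 2" using l by (intro mult_strict_left_mono) auto
    have l3: "l * (1 - l) < 2 * (1 - l)" using l by (intro mult_strict_right_mono) auto
    have \<delta>: "0 < \<delta>" "\<delta> < l" "l < 1 - \<delta>" using lp l2 l3 by (simp_all add: \<delta>_def)
    define I where "I a = (\<integral>\<^sup>+ s. indicator {a..a + \<delta>} s * Vt s \<partial>lborel)" for a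
    have I_eq: "I a = (\<integral>\<^sup>+ s. indicator {a..a + \<delta>} s * (Bc \<tau> * ennreal (WW l s)) \<partial>lborel)" for a
      unfolding I_def
      by (intro nn_integral_cong_AE) (rule AE_mp[OF aeV], intro AE_I2 impI, simp)
    have I1up: "I (l - \<delta>) \<le> Vt l * ennreal \<delta>"
    proof -
      have "I (l - \<delta>) \<le> (\<integral>\<^sup>+ s. Vt l * indicator {l - \<delta>..l} s \<partial>lborel)"
        unfolding I_def
      proof (intro nn_integral_mono)
        fix s :: real
        show "indicator {l - \<delta>..l - \<delta> + \<delta>} s * Vt s \<le> Vt l * indicator {l - \<delta>..l} s"
          by (cases "s \<in> {l - \<delta>..l}") (auto intro: Vmono)
      qed
      also have "\<dots> = Vt l * ennreal \<delta>" using \<delta> by (simp add: nn_integral_cmult_indicator)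
      finally show ?thesis .
    qed
    have I2lo: "Vt (1 - \<delta>) * ennreal \<delta> \<le> I (1 - \<delta>)"
    proof -
      have "Vt (1 - \<delta>) * ennreal \<delta> = (\<integral>\<^sup>+ s. Vt (1 - \<delta>) * indicator {1 - \<delta>..1} s \<partial>lborel)"
        using \<delta> by (simp add: nn_integral_cmult_indicator)
      also have "\<dots> \<le> I (1 - \<delta>)"
        unfolding I_def
      proof (intro nn_integral_mono)
        fix s :: real
        show "Vt (1 - \<delta>) * indicator {1 - \<delta>..1} s \<le> indicator {1 - \<delta>..1 - \<delta> + \<delta>} s * Vt s"
          by (cases "s \<in> {1 - \<delta>..1}") (auto intro: Vmono)
      qed
      finally show ?thesis .
    qed
    have VV: "Vt l \<le> Vt (1 - \<delta>)" by (rule Vmono) (use \<delta> in linarith)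
    have Ile: "I (l - \<delta>) \<le> I (1 - \<delta>)"
      using I1up mult_right_mono[OF VV, of "ennreal \<delta>"] I2lo by (meson order.trans zero_le)
    define m1 where "m1 = (1 - l) * (l - \<delta>)"
    define m2 where "m2 = l * \<delta>"
    have lo: "ennreal (b * m1) * ennreal \<delta> \<le> I (l - \<delta>)"
    proof -
      have "ennreal (b * m1) * ennreal \<delta> = (\<integral>\<^sup>+ s. ennreal (b * m1) * indicator {l - \<delta>..l} s \<partial>lborel)"
        using \<delta> by (simp add: nn_integral_cmult_indicator)
      also have "\<dots> \<le> I (l - \<delta>)"
        unfolding I_eq
      proof (intro nn_integral_mono)
        fix s :: real
        show "ennreal (b * m1) * indicator {l - \<delta>..l} s \<le> indicator {l - \<delta>..l - \<delta> + \<delta>} s * (Bc \<tau> * ennreal (WW l s))"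
        proof (cases "s \<in> {l - \<delta>..l}")
          case True
          then have s: "l - \<delta> \<le> s" "s \<le> l" by auto
          have W: "WW l s = (1 - l) * s" using s \<delta> l by (simp add: WW_on01 wlam_def)
          have "m1 \<le> WW l s" unfolding W m1_def using s l by (intro mult_left_mono) auto
          then have "b * m1 \<le> b * WW l s" using b by simp
          then have "ennreal (b * m1) \<le> Bc \<tau> * ennreal (WW l s)"
            using Bb b by (simp add: ennreal_mult'[symmetric] ennreal_leI)
          then show ?thesis using True by simp
        qed simp
      qed
      finally show ?thesis .
    qed
    have hi: "I (1 - \<delta>) \<le> ennreal (b * m2) * ennreal \<delta>"
    proof -
      have "I (1 - \<delta>) \<le> (\<integral>\<^sup>+ s. ennreal (b * m2) * indicator {1 - \<delta>..1} s \<partial>lborel)"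
        unfolding I_eq
      proof (intro nn_integral_mono)
        fix s :: real
        show "indicator {1 - \<delta>..1 - \<delta> + \<delta>} s * (Bc \<tau> * ennreal (WW l s)) \<le> ennreal (b * m2) * indicator {1 - \<delta>..1} s"
        proof (cases "s \<in> {1 - \<delta>..1}")
          case True
          then have s: "1 - \<delta> \<le> s" "s \<le> 1" by auto
          have "WW l s \<le> m2"
          proof (cases "s = 1")
            case True then show ?thesis using WW_one[of l] \<delta> l by (simp add: m2_def)
          next
            case False
            then have s1: "s < 1" using s by simp
            have "l < s" using s \<delta> by linarith
            then have W: "WW l s = l * (1 - s)" using s1 s \<delta> l by (simp add: WW_on01 wlam_def)
            show ?thesis unfolding W m2_def using s l by (intro mult_left_mono) auto
          qed
          then have "b * WW l s \<le> b * m2" using b by simp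
          then have "Bc \<tau> * ennreal (WW l s) \<le> ennreal (b * m2)"
            using Bb b WW_nonneg[OF l, of s] by (simp add: ennreal_mult'[symmetric] ennreal_leI)
          then show ?thesis using True by simp
        qed simp
      qed
      also have "\<dots> = ennreal (b * m2) * ennreal \<delta>" using \<delta> by (simp add: nn_integral_cmult_indicator)
      finally show ?thesis .
    qed
    have "ennreal (b * m1 * \<delta>) \<le> ennreal (b * m2 * \<delta>)"
    proof -
      have "ennreal (b * m1) * ennreal \<delta> \<le> ennreal (b * m2) * ennreal \<delta>" using lo Ile hi by (meson order.trans)
      moreover have "0 \<le> b * m1" "0 \<le> b * m2" using b \<delta> l by (auto simp: m1_def m2_def)
      moreover have "ennreal (b * m1 * \<delta>) = ennreal (b * m1) * ennreal \<delta>"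
        using \<delta> by (intro ennreal_mult'') auto
      moreover have "ennreal (b * m2 * \<delta>) = ennreal (b * m2) * ennreal \<delta>"
        using \<delta> by (intro ennreal_mult'') auto
      ultimately show ?thesis by simp
    qed
    then have "b * m1 * \<delta> \<le> b * m2 * \<delta>" using b \<delta> l by (subst (asm) ennreal_le_iff) (auto simp: m2_def)
    then have "m1 \<le> m2" using b \<delta> by (simp add: mult_le_cancel_right mult_le_cancel_left)
    moreover have "m1 = m2 + \<delta>" unfolding m1_def m2_def \<delta>_def by (simp add: field_simps)
    ultimately show False using \<delta> by simp
  next
    case False
    define \<alpha> where "\<alpha> = \<tau> - 1"
    have \<alpha>: "0 < \<alpha>" "\<alpha> < 1" using False \<tau> by (auto simp: \<alpha>_def)
    define q where "q r s = ennreal (if 0 \<le> s \<and> s < r then (r - s) powr (\<tau> - 2) else 0)" for r s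
    define T where "T r = (\<integral>\<^sup>+ s. q r s * Vt s \<partial>lborel)" for r
    have TC: "T r = C2 \<tau> * emeasure \<nu> {0..<r}" if r: "0 < r" for r
    proof -
      have "T r = (\<integral>\<^sup>+ s. (\<integral>\<^sup>+ t. q r s * h s t \<partial>\<nu>) \<partial>lborel)"
        unfolding T_def Vt_def by (intro nn_integral_cong nn_integral_cmult[symmetric] hm1)
      also have "\<dots> = (\<integral>\<^sup>+ t. (\<integral>\<^sup>+ s. q r s * h s t \<partial>lborel) \<partial>\<nu>)"
      proof (rule p\<nu>.Fubini')
        show "case_prod (\<lambda>t s. q r s * h s t) \<in> borel_measurable (\<nu> \<Otimes>\<^sub>M lborel)"
          unfolding m2 q_def h_def by measurable
      qed
      also have "\<dots> = (\<integral>\<^sup>+ t. C2 \<tau> * indicator {0..<r} t \<partial>\<nu>)"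
        unfolding q_def h_def by (intro nn_integral_cong inner2[OF r])
      also have "\<dots> = C2 \<tau> * emeasure \<nu> {0..<r}"
        using s\<nu> by (intro nn_integral_cmult_indicator) auto
      finally show ?thesis .
    qed
    have Tmono: "T r1 \<le> T r2" if "0 < r1" "r1 \<le> r2" for r1 r2
    proof -
      have "emeasure \<nu> {0..<r1} \<le> emeasure \<nu> {0..<r2}"
        using that s\<nu> by (intro emeasure_mono) auto
      then show ?thesis using that by (simp add: TC mult_left_mono)
    qed
    have TA: "T r = Bc \<tau> * ennreal (Acl l \<alpha> r)" if r: "l < r" "r \<le> 1" for r
    proof -
      have "T r = (\<integral>\<^sup>+ s. q r s * (Bc \<tau> * ennreal (WW l s)) \<partial>lborel)"
        unfolding T_def
        by (intro nn_integral_cong_AE) (rule AE_mp[OF aeV], intro AE_I2 impI, simp)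
      also have "\<dots> = (\<integral>\<^sup>+ s. Bc \<tau> * ennreal (indicator {0..r} s * ((r - s) powr (\<alpha> - 1) * wlam l s)) \<partial>lborel)"
      proof (intro nn_integral_cong)
        fix s :: real
        show "q r s * (Bc \<tau> * ennreal (WW l s)) = Bc \<tau> * ennreal (indicator {0..r} s * ((r - s) powr (\<alpha> - 1) * wlam l s))"
        proof (cases "0 \<le> s \<and> s < r")
          case True
          have W: "WW l s = wlam l s" using True r by (intro WW_on01) auto
          have wn: "0 \<le> wlam l s" using True r l by (intro wf_nonneg) auto
          have e: "\<tau> - 2 = \<alpha> - 1" by (simp add: \<alpha>_def)
          have "q r s * (Bc \<tau> * ennreal (WW l s)) = Bc \<tau> * (ennreal ((r - s) powr (\<alpha> - 1)) * ennreal (wlam l s))"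
            using True by (simp add: q_def W e mult_ac)
          also have "\<dots> = Bc \<tau> * ennreal ((r - s) powr (\<alpha> - 1) * wlam l s)"
            using wn by (simp add: ennreal_mult)
          finally show ?thesis using True by simp
        next
          case False
          then have "s < 0 \<or> r \<le> s" by auto
          then show ?thesis
          proof
            assume "s < 0" then show ?thesis by (simp add: q_def)
          next
            assume rs: "r \<le> s"
            show ?thesis
            proof (cases "s = r")
              case True then show ?thesis using \<alpha> by (simp add: q_def)
            next
              case False then show ?thesis using rs by (simp add: q_def)
            qed
          qed
        qed
      qed
      also have "\<dots> = Bc \<tau> * (\<integral>\<^sup>+ s. ennreal (indicator {0..r} s * ((r - s) powr (\<alpha> - 1) * wlam l s)) \<partial>lborel)"
        by (rule nn_integral_cmult) (simp add: wlam_def)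
      also have "(\<integral>\<^sup>+ s. ennreal (indicator {0..r} s * ((r - s) powr (\<alpha> - 1) * wlam l s)) \<partial>lborel) = ennreal (Acl l \<alpha> r)"
        by (rule nn_integral_has_integral_lebesgue[OF _ Acl_integral[OF l r \<alpha>]])
           (use r l in \<open>auto intro!: mult_nonneg_nonneg wf_nonneg\<close>)
      finally show ?thesis .
    qed
    obtain r1 where r1: "l < r1" "r1 < 1" "Acl l \<alpha> 1 < Acl l \<alpha> r1" using Acl_dec[OF l \<alpha>] by blast
    have A1: "0 \<le> Acl l \<alpha> 1"
      by (rule has_integral_nonneg[OF Acl_integral[OF l _ _ \<alpha>]]) (use l in \<open>auto intro!: mult_nonneg_nonneg wf_nonneg\<close>)
    have "T r1 \<le> T 1" using r1 l by (intro Tmono) auto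
    then have "ennreal b * ennreal (Acl l \<alpha> r1) \<le> ennreal b * ennreal (Acl l \<alpha> 1)"
      using TA[of r1] TA[of 1] r1 l Bb by simp
    then have "ennreal (b * Acl l \<alpha> r1) \<le> ennreal (b * Acl l \<alpha> 1)"
      using b by (simp add: ennreal_mult')
    then have "b * Acl l \<alpha> r1 \<le> b * Acl l \<alpha> 1" using b A1 by (subst (asm) ennreal_le_iff) auto
    then have "Acl l \<alpha> r1 \<le> Acl l \<alpha> 1" using b by simp
    then show False using r1 by simp
  qed
qed

theorem proposition3p2:
  fixes l :: real
  assumes "0 < l" and "l < 1"
  shows "(\<lambda>x. ln (g_lam l x)) \<in> gen_stieltjes 2 \<and>
         (\<forall>\<tau>\<in>{0<..<2}. (\<lambda>x. ln (g_lam l x)) \<notin> gen_stieltjes \<tau>)"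
proof
  show "(\<lambda>x. ln (g_lam l x)) \<in> gen_stieltjes 2" by (rule partA[OF assms])
  show "\<forall>\<tau>\<in>{0<..<2}. (\<lambda>x. ln (g_lam l x)) \<notin> gen_stieltjes \<tau>"
  proof (intro ballI notI)
    fix \<tau> :: real
    assume \<tau>: "\<tau> \<in> {0<..<2}" and mem: "(\<lambda>x. ln (g_lam l x)) \<in> gen_stieltjes \<tau>"
    from mem obtain \<nu> :: "real measure" and c :: real where
      "sets \<nu> = sets borel" "emeasure \<nu> {..<0} = 0" "c \<ge> 0"
      "\<forall>x>0. set_integrable \<nu> {0..} (\<lambda>t. 1 / (t + x) powr \<tau>) \<and>
         ln (g_lam l x) = (\<integral>t\<in>{0..}. 1 / (t + x) powr \<tau> \<partial>\<nu>) + c"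
      unfolding gen_stieltjes_def by auto
    then show False using partB[OF assms, of \<tau> \<nu> c] \<tau> by auto
  qed
qed

end
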